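(* Let $F$ be an absolutely continuous distribution function on $\mathbb{R}$ with density $f$, $0<\int(f'/f)^2dF<\infty$, $\psi_f=f'/f$, $h(y)=(1,\psi_f(y))^T$, and $\Gamma_t=\int_{z\ge y}h(z)h^T(z)dF(z)$, $t=F(y)$, assumed nonsingular for every $0\le t<1$. For $\varphi\in L_2(\mathbb{R},F)$ define $$\mathcal{L}\varphi(y)=\varphi(y)-\int_{z\le y}\varphi(z)h^T(z)\Gamma_{F(z)}^{-1}dF(z)\,h(y),\quad y\in\mathbb{R}.$$ Let $\mathcal{H}=\{\varphi\in L_2(\mathbb{R},F):\int\varphi h\,dF=0\}$. Then $\mathcal{L}$ is a norm-preserving transformation from $L_2(\mathbb{R},F)$ into $\mathcal{H}$: $\mathcal{L}\varphi\perp h$ and $\int(\mathcal{L}\varphi)^2dF=\int\varphi^2dF$. Consequently the process $w(\alpha)=\hat\xi(\gamma,\mathcal{L}\varphi)$, $\alpha=\gamma\varphi$, $\gamma\in L_2(\mathbb{R}^p,H)$, $\varphi\in L_2(\mathbb{R},F)$, is a function-parametric Brownian motion, i.e., a zero-mean Gaussian process with $Ew(\alpha_1)w(\alpha_2)=\langle\alpha_1,\alpha_2\rangle$.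
   Context: $H$ is a distribution function on $\mathbb{R}^p$; $\mathbb{L}=L_2(\mathbb{R}^{p+1},H\times F)$ with $\langle\alpha,\beta\rangle=\int\alpha\beta\,d(H\times F)$ (coordinatewise for vectors). $\dot\mu_\theta:\mathbb{R}^p\to\mathbb{R}^q$ has coordinates in $L_2(H)$ with $\int\dot\mu_\theta\dot\mu_\theta^TdH$ positive definite; $m_\theta(x,y)=\dot\mu_\theta(x)\psi_f(y)$. $b$ is the zero-mean Gaussian process indexed by $\mathbb{L}$, linear in its argument, with $Eb(\alpha_1)b(\alpha_2)=\langle\alpha_1,\alpha_2\rangle$; for $\alpha=\gamma\varphi$ write $b(\gamma,\varphi)=b(\alpha)$. $\alpha^1(x,y)=\alpha(x,y)-\int\alpha(x,y')dF(y')$, and $\hat\xi(\alpha)=\hat\xi(\gamma,\varphi)=b(\alpha^1)-\langle\alpha,m_\theta^T\rangle\langle m_\theta,m_\theta^T\rangle^{-1}b(m_\theta)$. *)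

theory Defs
  imports "HOL-Probability.Probability"
begin

definition L2set :: "'a measure \<Rightarrow> ('a \<Rightarrow> real) set" where
  "L2set M = {g. g \<in> borel_measurable M \<and> integrable M (\<lambda>x. (g x)^2)}"

definition ip :: "'a measure \<Rightarrow> ('a \<Rightarrow> real) \<Rightarrow> ('a \<Rightarrow> real) \<Rightarrow> real" where
  "ip M \<alpha> \<beta> = (LINT z|M. \<alpha> z * \<beta> z)"

definition distF :: "(real \<Rightarrow> real) \<Rightarrow> real measure" where
  "distF f = density lborel (\<lambda>x. ennreal (f x))"

text \<open>psi_f = f'/f, where f' is the derivative of the absolutely continuous density f.\<close>
definition psi :: "(real \<Rightarrow> real) \<Rightarrow> (real \<Rightarrow> real) \<Rightarrow> real \<Rightarrow> real" where
  "psi f f' y = f' y / f y"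

definition hvec :: "(real \<Rightarrow> real) \<Rightarrow> (real \<Rightarrow> real) \<Rightarrow> real \<Rightarrow> real^2" where
  "hvec f f' y = vector [1, psi f f' y]"

definition outer :: "real^'n \<Rightarrow> real^'n^'n" where
  "outer v = (\<chi> i j. v$i * v$j)"

text \<open>Gamma_t with t = F(y): integral of h h^T over {z >= y} w.r.t. dF.\<close>
definition Gam :: "(real \<Rightarrow> real) \<Rightarrow> (real \<Rightarrow> real) \<Rightarrow> real \<Rightarrow> real^2^2" where
  "Gam f f' y = (LINT z:{y..}|distF f. outer (hvec f f' z))"

definition Lop :: "(real \<Rightarrow> real) \<Rightarrow> (real \<Rightarrow> real) \<Rightarrow> (real \<Rightarrow> real) \<Rightarrow> real \<Rightarrow> real" where
  "Lop f f' \<phi> y = \<phi> y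
     - (LINT z:{..y}|distF f. \<phi> z *\<^sub>R (hvec f f' z v* matrix_inv (Gam f f' z))) \<bullet> hvec f f' y"

definition centered_normal :: "'w measure \<Rightarrow> ('w \<Rightarrow> real) \<Rightarrow> real \<Rightarrow> bool" where
  "centered_normal P X v \<longleftrightarrow>
     (v = 0 \<and> (AE \<omega> in P. X \<omega> = 0)) \<or>
     (v > 0 \<and> distributed P lborel X (normal_density 0 (sqrt v)))"

text \<open>Zero-mean Gaussian process indexed by I: random variables whose finite linear
  combinations are all centered normal (i.e. all finite-dimensional distributions are
  centered jointly Gaussian).\<close>
definition zero_mean_gaussian :: "'w measure \<Rightarrow> 'i set \<Rightarrow> ('i \<Rightarrow> 'w \<Rightarrow> real) \<Rightarrow> bool" where
  "zero_mean_gaussian P I X \<longleftrightarrow>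
     (\<forall>i\<in>I. X i \<in> borel_measurable P) \<and>
     (\<forall>xs cs. set xs \<subseteq> I \<longrightarrow> length cs = length xs \<longrightarrow>
        (\<exists>v. centered_normal P (\<lambda>\<omega>. \<Sum>k<length xs. cs!k * X (xs!k) \<omega>) v))"

definition mfun :: "('a \<Rightarrow> real^'q) \<Rightarrow> (real \<Rightarrow> real) \<Rightarrow> 'q \<Rightarrow> ('a \<times> real \<Rightarrow> real)" where
  "mfun mu ps j = (\<lambda>(x, y). mu x $ j * ps y)"

definition alpha1 :: "real measure \<Rightarrow> ('a \<times> real \<Rightarrow> real) \<Rightarrow> ('a \<times> real \<Rightarrow> real)" where
  "alpha1 MF \<alpha> = (\<lambda>(x, y). \<alpha> (x, y) - (LINT y'|MF. \<alpha> (x, y')))"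

definition xi_hat :: "('a \<times> real) measure \<Rightarrow> real measure \<Rightarrow> ('q::finite \<Rightarrow> ('a \<times> real \<Rightarrow> real))
     \<Rightarrow> (('a \<times> real \<Rightarrow> real) \<Rightarrow> 'w \<Rightarrow> real) \<Rightarrow> ('a \<times> real \<Rightarrow> real) \<Rightarrow> 'w \<Rightarrow> real" where
  "xi_hat HF MF m b \<alpha> \<omega> =
     b (alpha1 MF \<alpha>) \<omega>
     - (((\<chi> j. ip HF \<alpha> (m j)) :: real^'q) v* matrix_inv (\<chi> i j. ip HF (m i) (m j)))
         \<bullet> (\<chi> j. b (m j) \<omega>)"

end

theory Submission
  imports Defs
begin

lemma matrix_inv_eq:
  fixes A B :: "real^'n^'n"
  assumes "A ** B = mat 1" "B ** A = mat 1"
  shows "matrix_inv A = B"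
proof -
  have ex: "\<exists>A'. A ** A' = mat 1 \<and> A' ** A = mat 1" using assms by blast
  let ?C = "matrix_inv A"
  have C: "A ** ?C = mat 1 \<and> ?C ** A = mat 1"
    unfolding matrix_inv_def using someI_ex[OF ex] by simp
  have "?C = ?C ** (A ** B)" using assms by (simp add: matrix_mul_rid)
  also have "\<dots> = (?C ** A) ** B" by (simp add: matrix_mul_assoc)
  also have "\<dots> = B" using C by (simp add: matrix_mul_lid)
  finally show ?thesis .
qed

definition inv2 :: "real^2^2 \<Rightarrow> real^2^2" where
  "inv2 A = (let dt = A$1$1 * A$2$2 - A$1$2 * A$2$1 in
     (\<chi> i j. if i = 1 then (if j = 1 then A$2$2 / dt else - A$1$2 / dt)
             else (if j = 1 then - A$2$1 / dt else A$1$1 / dt)))"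

lemma matrix_inv_2:
  fixes A :: "real^2^2"
  assumes "A$1$1 * A$2$2 - A$1$2 * A$2$1 \<noteq> 0"
  shows "matrix_inv A = inv2 A"
proof (rule matrix_inv_eq)
  obtain a b c d where abcd: "A$1$1 = a" "A$1$2 = b" "A$2$1 = c" "A$2$2 = d" by blast
  have dt: "a*d - b*c \<noteq> 0" using assms abcd by simp
  show "A ** inv2 A = mat 1" using dt
    by (simp add: abcd inv2_def Let_def matrix_matrix_mult_def vec_eq_iff forall_2 sum_2 mat_def diff_divide_distrib[symmetric] add_divide_distrib[symmetric] right_diff_distrib mult.commute)
  show "inv2 A ** A = mat 1" using dt
    by (simp add: abcd inv2_def Let_def matrix_matrix_mult_def vec_eq_iff forall_2 sum_2 mat_def diff_divide_distrib[symmetric] add_divide_distrib[symmetric] right_diff_distrib mult.commute)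
qed


locale khm =
  fixes f f' :: "real \<Rightarrow> real"
  assumes f_meas: "f \<in> borel_measurable borel"
    and f_nonneg: "\<forall>y. 0 \<le> f y"
    and f_int: "integrable lborel f"
    and f_one: "integral\<^sup>L lborel f = 1"
    and f_ac: "\<forall>a b. a \<le> b \<longrightarrow>
                 set_integrable lborel {a..b} f' \<and> (LBINT x:{a..b}. f' x) = f b - f a"
    and fisher_int: "integrable (distF f) (\<lambda>y. (psi f f' y)^2)"
    and Gam_nonsing: "\<forall>y. measure (distF f) {..y} < 1 \<longrightarrow> invertible (Gam f f' y)"

lemma (in khm) space_M[simp]: "space (distF f) = UNIV"
  by (simp add: distF_def)
lemma (in khm) sets_M[simp]: "sets (distF f) = sets borel"
  by (simp add: distF_def)

sublocale khm \<subseteq> P: prob_space "distF f"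
proof
  have "emeasure (distF f) (space (distF f)) = (\<integral>\<^sup>+ x. ennreal (f x) \<partial>lborel)"
    unfolding distF_def using f_meas
    by (subst emeasure_density) (auto simp: measurable_cong_sets[OF sets_lborel refl])
  also have "\<dots> = ennreal (integral\<^sup>L lborel f)"
    using f_int f_nonneg by (intro nn_integral_eq_integral) auto
  finally show "emeasure (distF f) (space (distF f)) = 1" using f_one by simp
qed

context khm begin

abbreviation "M \<equiv> distF f"
abbreviation "ps \<equiv> psi f f'"

lemma meas_M_iff[simp]: "g \<in> borel_measurable M \<longleftrightarrow> g \<in> borel_measurable borel"
  by (rule arg_cong[where f="\<lambda>S. g \<in> S"]) (rule measurable_cong_sets[OF sets_M refl])

lemma point_null'[simp]: "emeasure M {x} = 0"
proof -
  have "emeasure M {x} = (\<integral>\<^sup>+ y. ennreal (f y) * indicator {x} y \<partial>lborel)"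
    unfolding distF_def using f_meas
    by (subst emeasure_density) (auto simp: measurable_cong_sets[OF sets_lborel refl])
  also have "AE y in lborel. ennreal (f y) * indicator {x} y = 0"
    using AE_lborel_singleton[of x] by eventually_elim auto
  then have "(\<integral>\<^sup>+ y. ennreal (f y) * indicator {x} y \<partial>lborel) = (\<integral>\<^sup>+ (y::real). 0 \<partial>lborel)"
    by (rule nn_integral_cong_AE)
  finally show ?thesis by simp
qed

lemma point_null[simp]: "measure M {x} = 0"
  by (simp add: measure_def)

lemma f'_meas: "f' \<in> borel_measurable borel"
proof (rule borel_measurable_LIMSEQ_real)
  fix n :: nat
  have "set_integrable lborel {- real n..real n} f'" using f_ac by auto
  then have "(\<lambda>x. indicator {- real n..real n} x *\<^sub>R f' x) \<in> borel_measurable lborel"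
    unfolding set_integrable_def by (rule borel_measurable_integrable)
  then show "(\<lambda>x. indicator {- real n..real n} x *\<^sub>R f' x) \<in> borel_measurable borel"
    by (simp only: measurable_cong_sets[OF sets_lborel refl])
next
  fix x :: real
  obtain N :: nat where N: "\<bar>x\<bar> \<le> real N" using real_arch_simple by blast
  have "\<forall>n\<ge>N. indicator {- real n..real n} x *\<^sub>R f' x = f' x"
  proof (intro allI impI)
    fix n assume "N \<le> n"
    then have "\<bar>x\<bar> \<le> real n" using N by (meson order_trans of_nat_le_iff)
    then show "indicator {- real n..real n} x *\<^sub>R f' x = f' x" by (auto simp: indicator_def)
  qed
  then show "(\<lambda>n. indicator {- real n..real n} x *\<^sub>R f' x) \<longlonglongrightarrow> f' x"
    by (intro tendsto_eventually) (auto simp: eventually_sequentially)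
qed

lemma ps_meas[measurable]: "ps \<in> borel_measurable borel"
  unfolding psi_def using f'_meas f_meas by measurable

lemma ps2_int: "integrable M (\<lambda>y. (ps y)^2)" using fisher_int .

lemma ps_int: "integrable M ps"
proof (rule Bochner_Integration.integrable_bound[where f="\<lambda>y. 1 + (ps y)^2"])
  show "integrable M (\<lambda>y. 1 + (ps y)^2)" using ps2_int by simp
  show "AE x in M. norm (ps x) \<le> norm (1 + (ps x)^2)"
  proof (intro AE_I2)
    fix x have "\<bar>ps x\<bar> \<le> 1 + (ps x)^2"
    proof (cases "\<bar>ps x\<bar> \<le> 1")
      case False
      then have "\<bar>ps x\<bar> * 1 \<le> \<bar>ps x\<bar> * \<bar>ps x\<bar>" by (intro mult_left_mono) auto
      then show ?thesis by (simp add: power2_eq_square abs_mult_self)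
    qed (simp add: add_increasing2)
    then show "norm (ps x) \<le> norm (1 + (ps x)^2)" by simp
  qed
qed simp

end

lemma alg_mono:
  fixes a c d \<alpha> \<gamma> \<delta> :: real
  assumes "0 \<le> a" "0 \<le> d" "0 \<le> \<alpha>" "0 \<le> \<delta>" "c^2 \<le> a*d" "\<gamma>^2 \<le> \<alpha>*\<delta>"
  shows "a*d - c^2 \<le> (a+\<alpha>)*(d+\<delta>) - (c+\<gamma>)^2"
proof -
  have 1: "(c*\<gamma>)^2 \<le> (a*d)*(\<alpha>*\<delta>)"
    unfolding power_mult_distrib by (rule mult_mono) (use assms in auto)
  have 2: "4*((a*d)*(\<alpha>*\<delta>)) \<le> (a*\<delta> + \<alpha>*d)^2"
  proof -
    have "0 \<le> (a*\<delta> - \<alpha>*d)^2" by simp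
    then show ?thesis by (simp add: power2_eq_square algebra_simps)
  qed
  have "(2*(c*\<gamma>))^2 \<le> (a*\<delta> + \<alpha>*d)^2" using 1 2 by (simp add: power_mult_distrib)
  then have "\<bar>2*(c*\<gamma>)\<bar> \<le> \<bar>a*\<delta> + \<alpha>*d\<bar>" by (simp add: abs_le_square_iff)
  moreover have "\<bar>a*\<delta> + \<alpha>*d\<bar> = a*\<delta> + \<alpha>*d" using assms by simp
  ultimately have "2*(c*\<gamma>) \<le> a*\<delta> + \<alpha>*d" by linarith
  then show ?thesis using assms by (simp add: power2_eq_square algebra_simps)
qed

lemma quad_CS:
  fixes A C Dq :: real
  assumes "\<And>t. 0 \<le> Dq - 2*t*C + t^2*A" "0 \<le> A"
  shows "C^2 \<le> A*Dq"
proof (cases "A = 0")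
  case True
  show ?thesis
  proof (cases "C = 0")
    case False
    have "0 \<le> Dq - 2*((Dq+1)/(2*C))*C" using assms(1)[of "(Dq+1)/(2*C)"] True by simp
    then show ?thesis using False by (simp add: field_simps)
  qed (use assms True in \<open>auto\<close>)
next
  case False
  then have A: "A > 0" using assms by simp
  have "0 \<le> Dq - 2*(C/A)*C + (C/A)^2*A" by (rule assms(1))
  also have "\<dots> = Dq - C^2/A" using A by (simp add: power2_eq_square field_simps)
  finally have "C^2/A \<le> Dq" by simp
  then show ?thesis using A by (simp add: field_simps mult.commute)
qed

context khm begin

lemma sq_int_imp_int:
  fixes g :: "real \<Rightarrow> real"
  assumes g: "g \<in> borel_measurable borel" and g2: "integrable M (\<lambda>y. (g y)^2)"
  shows "integrable M g"
proof (rule Bochner_Integration.integrable_bound[where f="\<lambda>y. 1 + (g y)^2"])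
  show "integrable M (\<lambda>y. 1 + (g y)^2)" using g2 by simp
  show "AE x in M. norm (g x) \<le> norm (1 + (g x)^2)"
  proof (intro AE_I2)
    fix x have "\<bar>g x\<bar> \<le> 1 + (g x)^2"
    proof (cases "\<bar>g x\<bar> \<le> 1")
      case False
      then have "\<bar>g x\<bar> * 1 \<le> \<bar>g x\<bar> * \<bar>g x\<bar>" by (intro mult_left_mono) auto
      then show ?thesis by (simp add: power2_eq_square abs_mult_self)
    qed (simp add: add_increasing2)
    then show "norm (g x) \<le> norm (1 + (g x)^2)" by simp
  qed
qed (use g in simp)

lemma prod_int:
  fixes g k :: "real \<Rightarrow> real"
  assumes g: "g \<in> borel_measurable borel" and g2: "integrable M (\<lambda>y. (g y)^2)"
    and k: "k \<in> borel_measurable borel" and k2: "integrable M (\<lambda>y. (k y)^2)"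
  shows "integrable M (\<lambda>y. g y * k y)"
proof (rule Bochner_Integration.integrable_bound[where f="\<lambda>y. (g y)^2 + (k y)^2"])
  show "integrable M (\<lambda>y. (g y)^2 + (k y)^2)" using g2 k2 by simp
  show "AE x in M. norm (g x * k x) \<le> norm ((g x)^2 + (k x)^2)"
  proof (intro AE_I2)
    fix x
    have "0 \<le> (\<bar>g x\<bar> - \<bar>k x\<bar>)^2" by simp
    then have "2 * (\<bar>g x\<bar> * \<bar>k x\<bar>) \<le> (g x)^2 + (k x)^2"
      by (simp add: power2_eq_square algebra_simps abs_mult_self)
    moreover have "0 \<le> \<bar>g x\<bar> * \<bar>k x\<bar>" by simp
    ultimately have "\<bar>g x\<bar> * \<bar>k x\<bar> \<le> (g x)^2 + (k x)^2" by linarith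
    moreover have "0 \<le> (g x)^2 + (k x)^2" by simp
    ultimately show "norm (g x * k x) \<le> norm ((g x)^2 + (k x)^2)"
      by (simp add: abs_mult)
  qed
qed (use g k in simp)

lemma ind_int:
  fixes g :: "real \<Rightarrow> real"
  assumes "integrable M g" "S \<in> sets borel"
  shows "integrable M (\<lambda>x. indicator S x * g x)"
  using integrable_mult_indicator[of S M g] assms by simp

definition aa :: "real \<Rightarrow> real" where "aa y = (LINT x|M. indicator {y..} x * 1)"
definition cc :: "real \<Rightarrow> real" where "cc y = (LINT x|M. indicator {y..} x * ps x)"
definition dd :: "real \<Rightarrow> real" where "dd y = (LINT x|M. indicator {y..} x * (ps x)^2)"
definition DD :: "real \<Rightarrow> real" where "DD y = aa y * dd y - (cc y)^2"
definition "UU = {y. measure M {..y} < 1}"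

lemma aa_meas: "aa y = measure M {y..}"
  unfolding aa_def by simp

definition E11 :: "real^2^2" where "E11 = (\<chi> i j. if i = 1 \<and> j = 1 then 1 else 0)"
definition E12 :: "real^2^2" where "E12 = (\<chi> i j. if i \<noteq> j then 1 else 0)"
definition E22 :: "real^2^2" where "E22 = (\<chi> i j. if i = 2 \<and> j = 2 then 1 else 0)"

lemma outer_hvec: "outer (hvec f f' z) = E11 + ps z *\<^sub>R E12 + (ps z)^2 *\<^sub>R E22"
  by (simp add: outer_def hvec_def E11_def E12_def E22_def vec_eq_iff forall_2 power2_eq_square)

lemma Gam_eq: "Gam f f' y = aa y *\<^sub>R E11 + cc y *\<^sub>R E12 + dd y *\<^sub>R E22"
proof -
  have i1: "integrable M (\<lambda>x. indicator {y..} x * (1::real))" by (rule ind_int) auto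
  have i2: "integrable M (\<lambda>x. indicator {y..} x * ps x)" by (rule ind_int) (auto simp: ps_int)
  have i3: "integrable M (\<lambda>x. indicator {y..} x * (ps x)^2)" by (rule ind_int) (auto simp: ps2_int)
  have "Gam f f' y = (LINT z|M. (indicator {y..} z * 1) *\<^sub>R E11 + (indicator {y..} z * ps z) *\<^sub>R E12
                         + (indicator {y..} z * (ps z)^2) *\<^sub>R E22)"
    unfolding Gam_def set_lebesgue_integral_def outer_hvec
    by (intro Bochner_Integration.integral_cong) (auto simp: scaleR_add_right)
  also have "\<dots> = aa y *\<^sub>R E11 + cc y *\<^sub>R E12 + dd y *\<^sub>R E22"
    unfolding aa_def cc_def dd_def
    apply (subst Bochner_Integration.integral_add)
    using i1 i2 i3 apply (auto)[2]
    apply (subst Bochner_Integration.integral_add)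
    using i1 i2 i3 apply (auto)[2]
    using i1 i2 i3 by (simp del: mult_1_right)
  finally show ?thesis .
qed

lemma Gam_comp: "Gam f f' y $ 1 $ 1 = aa y" "Gam f f' y $ 1 $ 2 = cc y"
   "Gam f f' y $ 2 $ 1 = cc y" "Gam f f' y $ 2 $ 2 = dd y"
  by (simp_all add: Gam_eq E11_def E12_def E22_def)

lemma det_Gam: "det (Gam f f' y) = DD y"
  by (simp add: det_2 Gam_comp DD_def power2_eq_square)

lemma UU_DD: "y \<in> UU \<Longrightarrow> DD y \<noteq> 0"
  using Gam_nonsing invertible_det_nz[of "Gam f f' y"] det_Gam unfolding UU_def by auto

end

context khm begin

lemma meas_tail:
  fixes g :: "real \<Rightarrow> real"
  assumes [measurable]: "g \<in> borel_measurable borel"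
  shows "(\<lambda>y. LINT x|M. indicator {y..} x * g x) \<in> borel_measurable borel"
proof -
  have "(\<lambda>(y, x). indicator {y..} x * g x) \<in> borel_measurable (borel \<Otimes>\<^sub>M (borel::real measure))"
  proof -
    have "(\<lambda>(y, x). indicator {y..} x * g x) = (\<lambda>p::real\<times>real. (if fst p \<le> snd p then 1 else 0) * g (snd p))"
      by (auto simp: fun_eq_iff indicator_def)
    also have "\<dots> \<in> borel_measurable (borel \<Otimes>\<^sub>M borel)" by measurable
    finally show ?thesis .
  qed
  then have "(\<lambda>(y, x). indicator {y..} x * g x) \<in> borel_measurable (borel \<Otimes>\<^sub>M M)"
    by (simp only: measurable_cong_sets[OF sets_pair_measure_cong[OF refl sets_M] refl])
  then show ?thesis
    using P.borel_measurable_lebesgue_integral[of "\<lambda>y x. indicator {y..} x * g x" borel] by simp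
qed

lemma meas_head:
  fixes g :: "real \<Rightarrow> real"
  assumes [measurable]: "g \<in> borel_measurable borel"
  shows "(\<lambda>y. LINT x|M. indicator {..y} x * g x) \<in> borel_measurable borel"
proof -
  have "(\<lambda>(y, x). indicator {..y} x * g x) \<in> borel_measurable (borel \<Otimes>\<^sub>M (borel::real measure))"
  proof -
    have "(\<lambda>(y, x). indicator {..y} x * g x) = (\<lambda>p::real\<times>real. (if snd p \<le> fst p then 1 else 0) * g (snd p))"
      by (auto simp: fun_eq_iff indicator_def)
    also have "\<dots> \<in> borel_measurable (borel \<Otimes>\<^sub>M borel)" by measurable
    finally show ?thesis .
  qed
  then have "(\<lambda>(y, x). indicator {..y} x * g x) \<in> borel_measurable (borel \<Otimes>\<^sub>M M)"
    by (simp only: measurable_cong_sets[OF sets_pair_measure_cong[OF refl sets_M] refl])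
  then show ?thesis
    using P.borel_measurable_lebesgue_integral[of "\<lambda>y x. indicator {..y} x * g x" borel] by simp
qed

lemma aa_m[measurable]: "aa \<in> borel_measurable borel"
  unfolding aa_def by (rule meas_tail) simp
lemma cc_m[measurable]: "cc \<in> borel_measurable borel"
  unfolding cc_def by (rule meas_tail) simp
lemma dd_m[measurable]: "dd \<in> borel_measurable borel"
  unfolding dd_def by (rule meas_tail) simp
lemma DD_m[measurable]: "DD \<in> borel_measurable borel"
  unfolding DD_def by measurable

lemma CS_set:
  fixes g :: "real \<Rightarrow> real"
  assumes g[measurable]: "g \<in> borel_measurable borel" and g2: "integrable M (\<lambda>y. (g y)^2)"
    and S: "S \<in> sets borel"
  shows "(LINT x|M. indicator S x * g x)^2 \<le> (LINT x|M. indicator S x * 1) * (LINT x|M. indicator S x * (g x)^2)"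
proof (rule quad_CS)
  have i1: "integrable M (\<lambda>x. indicator S x * (1::real))" by (rule ind_int) (use S in auto)
  have i2: "integrable M (\<lambda>x. indicator S x * g x)" by (rule ind_int) (use S sq_int_imp_int[OF g g2] in auto)
  have i3: "integrable M (\<lambda>x. indicator S x * (g x)^2)" by (rule ind_int) (use S g2 in auto)
  fix t :: real
  have eq: "(\<lambda>x. indicator S x * (g x - t)^2) = (\<lambda>x. indicator S x * (g x)^2 - (2*t) * (indicator S x * g x) + t^2 * (indicator S x * 1))"
    by (auto simp: fun_eq_iff power2_eq_square algebra_simps)
  have "0 \<le> (LINT x|M. indicator S x * (g x - t)^2)" by (intro integral_nonneg_AE) auto
  also have "\<dots> = (LINT x|M. indicator S x * (g x)^2) - 2*t*(LINT x|M. indicator S x * g x) + t^2 * (LINT x|M. indicator S x * 1)"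
    unfolding eq using i1 i2 i3 by simp
  finally show "0 \<le> (LINT x|M. indicator S x * (g x)^2) - 2*t*(LINT x|M. indicator S x * g x) + t^2 * (LINT x|M. indicator S x * 1)" .
  show "0 \<le> (LINT x|M. indicator S x * (1::real))" by (intro integral_nonneg_AE) auto
qed

lemma split_int:
  fixes g :: "real \<Rightarrow> real"
  assumes "integrable M g" "z \<le> y"
  shows "(LINT x|M. indicator {z..} x * g x) = (LINT x|M. indicator {z..<y} x * g x) + (LINT x|M. indicator {y..} x * g x)"
proof -
  have "(\<lambda>x. indicator {z..} x * g x) = (\<lambda>x. indicator {z..<y} x * g x + indicator {y..} x * g x)"
    using assms(2) by (auto simp: fun_eq_iff indicator_def)
  then show ?thesis using assms ind_int by simp
qed

lemma aa_nonneg: "0 \<le> aa y" unfolding aa_def by (intro integral_nonneg_AE) auto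
lemma dd_nonneg: "0 \<le> dd y" unfolding dd_def by (intro integral_nonneg_AE) auto
lemma aa_le1: "aa y \<le> 1" unfolding aa_meas by simp
lemma CS_tail: "(cc y)^2 \<le> aa y * dd y"
  unfolding aa_def cc_def dd_def by (rule CS_set) (auto simp: ps2_int)
lemma DD_nonneg: "0 \<le> DD y" using CS_tail unfolding DD_def by simp
lemma UU_DD_pos: "y \<in> UU \<Longrightarrow> 0 < DD y" using UU_DD[of y] DD_nonneg[of y] by (simp add: order_less_le)

lemma dd_le: "dd y \<le> (LINT x|M. (ps x)^2)"
  unfolding dd_def
proof (rule integral_mono_AE)
  show "integrable M (\<lambda>x. indicator {y..} x * (ps x)^2)" by (rule ind_int) (auto simp: ps2_int)
qed (auto simp: ps2_int indicator_def)
lemma cc_le: "\<bar>cc y\<bar> \<le> (LINT x|M. \<bar>ps x\<bar>)"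
proof -
  have "\<bar>cc y\<bar> \<le> (LINT x|M. \<bar>indicator {y..} x * ps x\<bar>)"
    unfolding cc_def by (rule integral_abs_bound)
  also have "\<dots> \<le> (LINT x|M. \<bar>ps x\<bar>)"
  proof (rule integral_mono_AE)
    show "integrable M (\<lambda>x. \<bar>indicator {y..} x * ps x\<bar>)" by (intro integrable_abs ind_int) (auto simp: ps_int)
  qed (auto simp: ps_int indicator_def)
  finally show ?thesis .
qed

lemma UU_down: "z \<le> y \<Longrightarrow> y \<in> UU \<Longrightarrow> z \<in> UU"
  unfolding UU_def using P.finite_measure_mono[of "{..z}" "{..y}"] by auto

lemma DD_mono:
  assumes "z \<le> y"
  shows "DD y \<le> DD z"
proof -
  define \<alpha> where "\<alpha> = (LINT x|M. indicator {z..<y} x * (1::real))"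
  define \<gamma> where "\<gamma> = (LINT x|M. indicator {z..<y} x * ps x)"
  define \<delta> where "\<delta> = (LINT x|M. indicator {z..<y} x * (ps x)^2)"
  have "aa z = \<alpha> + aa y" unfolding aa_def \<alpha>_def by (rule split_int) (use assms in auto)
  moreover have "cc z = \<gamma> + cc y" unfolding cc_def \<gamma>_def by (rule split_int) (use assms ps_int in auto)
  moreover have "dd z = \<delta> + dd y" unfolding dd_def \<delta>_def by (rule split_int) (use assms ps2_int in auto)
  moreover have "\<gamma>^2 \<le> \<alpha> * \<delta>" unfolding \<alpha>_def \<gamma>_def \<delta>_def by (rule CS_set) (auto simp: ps2_int)
  moreover have "0 \<le> \<alpha>" "0 \<le> \<delta>" unfolding \<alpha>_def \<delta>_def by (auto intro!: integral_nonneg_AE)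
  ultimately show ?thesis
    using alg_mono[of "aa y" "dd y" \<alpha> \<delta> "cc y" \<gamma>] aa_nonneg dd_nonneg CS_tail
    unfolding DD_def by (simp add: algebra_simps)
qed

lemma notUU_null: "y \<notin> UU \<Longrightarrow> {y..} \<in> null_sets M"
proof -
  assume "y \<notin> UU"
  then have m: "1 \<le> measure M {..y}" unfolding UU_def by simp
  have "measure M {y<..} = 1 - measure M {..y}"
    using P.prob_compl[of "{..y}"] by (simp add: Compl_eq_Diff_UNIV[symmetric] Compl_atMost)
  then have z1: "measure M {y<..} = 0" using m P.prob_le_1[of "{..y}"] by simp
  have e: "{y..} = {y<..} \<union> {y}" by auto
  have "{y} \<in> null_sets M" by (simp add: null_sets_def)
  then have "measure M {y..} = measure M {y<..}" unfolding e by (intro measure_Un_null_set) auto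
  then have "measure M {y..} = 0" using z1 by simp
  then show ?thesis by (simp add: P.emeasure_eq_measure null_sets_def)
qed

lemma notUU_zero:
  fixes g :: "real \<Rightarrow> real"
  assumes "y \<notin> UU"
  shows "(LINT x|M. indicator {y..} x * g x) = 0"
proof (rule integral_eq_zero_AE)
  show "AE x in M. indicator {y..} x * g x = 0"
    using AE_not_in[OF notUU_null[OF assms]] by eventually_elim auto
qed

lemma notUU_abc: "y \<notin> UU \<Longrightarrow> aa y = 0 \<and> cc y = 0 \<and> dd y = 0"
  unfolding aa_def cc_def dd_def using notUU_zero[of y "\<lambda>x. 1"] notUU_zero[of y ps] notUU_zero[of y "\<lambda>x. (ps x)^2"] by blast

lemma notUU_Gam: "y \<notin> UU \<Longrightarrow> Gam f f' y = 0"
  using notUU_abc[of y] by (simp add: Gam_eq)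

lemma UU_borel[measurable]: "UU \<in> sets borel"
proof -
  have "(\<lambda>y. measure M {..y}) \<in> borel_measurable borel"
    by (rule borel_measurable_mono) (auto simp: mono_def intro!: P.finite_measure_mono)
  then show ?thesis unfolding UU_def by measurable
qed

end

context khm begin

lemma UU_nonempty: "UU \<noteq> {}"
proof -
  have "(\<lambda>n. measure M {..- real n}) \<longlonglongrightarrow> measure M (\<Inter>n. {..- real n})"
    by (intro P.finite_Lim_measure_decseq) (auto simp: decseq_def)
  moreover have "(\<Inter>n. {..- real n}) = {}"
  proof (safe)
    fix x assume "x \<in> (\<Inter>n. {..- real n})"
    then have xn: "x \<le> - real n" for n by blast
    obtain n :: nat where "- x < real n" using reals_Archimedean2 by blast
    with xn[of n] show "x \<in> {}" by linarith
  qed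
  ultimately have "(\<lambda>n. measure M {..- real n}) \<longlonglongrightarrow> 0" by simp
  then have "eventually (\<lambda>n. measure M {..- real n} < 1) sequentially"
    by (rule order_tendstoD) simp
  then obtain n where "measure M {..- real n} < 1" by (auto simp: eventually_sequentially)
  then show ?thesis unfolding UU_def by blast
qed

lemma seq_exists:
  "\<exists>b::nat \<Rightarrow> real. strict_mono b \<and> (\<forall>n. b n \<in> UU) \<and> (AE x in M. \<exists>n. x < b n)"
proof (cases "UU = UNIV")
  case True
  show ?thesis
  proof (intro exI[of _ "\<lambda>n. real n"] conjI allI AE_I2)
    show "strict_mono (\<lambda>n. real n)" by (auto simp: strict_mono_def)
    fix x :: real
    obtain n :: nat where "x < real n" using reals_Archimedean2 by blast
    then show "\<exists>n. x < real n" by blast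
  qed (use True in auto)
next
  case False
  then obtain y0 where y0: "y0 \<notin> UU" by blast
  have bdd: "bdd_above UU"
  proof (rule bdd_aboveI)
    fix y assume "y \<in> UU"
    then show "y \<le> y0" using y0 UU_down[of y0 y] by force
  qed
  define B where "B = Sup UU"
  have below: "y \<in> UU" if yB: "y < B" for y
  proof -
    obtain u where "u \<in> UU" "y < u" using less_cSupE[of y UU] yB UU_nonempty unfolding B_def by blast
    then show ?thesis using UU_down[of y u] by simp
  qed
  have BnotU: "B \<notin> UU"
  proof
    assume BU: "B \<in> UU"
    have dec: "decseq (\<lambda>n. {..B + 1/(Suc n)})"
    proof (rule decseq_SucI)
      fix n :: nat
      have "1/real (Suc (Suc n)) \<le> 1/real (Suc n)" by (rule divide_left_mono) auto
      then show "{..B + 1/(Suc (Suc n))} \<subseteq> {..B + 1/(Suc n)}" by auto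
    qed
    have lim: "(\<lambda>n. measure M {..B + 1/(Suc n)}) \<longlonglongrightarrow> measure M (\<Inter>n. {..B + 1/(Suc n)})"
      by (intro P.finite_Lim_measure_decseq dec) auto
    have inter: "(\<Inter>n. {..B + 1/(Suc n)}) = {..B}"
    proof (safe)
      fix x assume x: "x \<in> (\<Inter>n. {..B + 1/(Suc n)})"
      show "x \<le> B"
      proof (rule ccontr)
        assume "\<not> x \<le> B"
        then obtain n where "inverse (real (Suc n)) < x - B"
          using reals_Archimedean[of "x - B"] by auto
        moreover have "x \<le> B + 1/(Suc n)" using x by blast
        ultimately show False by (simp add: inverse_eq_divide)
      qed
    next
      fix x n assume "x \<le> B"
      moreover have "0 \<le> 1/real (Suc n)" by simp
      ultimately show "x \<le> B + 1/(Suc n)" by linarith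
    qed
    have "\<forall>n. 1 \<le> measure M {..B + 1/(Suc n)}"
    proof
      fix n
      have "B + 1/(Suc n) \<notin> UU"
      proof
        assume "B + 1/(Suc n) \<in> UU"
        then have "B + 1/(Suc n) \<le> B" unfolding B_def by (rule cSup_upper[OF _ bdd])
        then show False by simp
      qed
      then show "1 \<le> measure M {..B + 1/(Suc n)}" unfolding UU_def by simp
    qed
    then have "1 \<le> measure M {..B}" using LIMSEQ_le_const[OF lim] inter by auto
    then show False using BU unfolding UU_def by simp
  qed
  define b where "b n = B - 1/(Suc n)" for n :: nat
  show ?thesis
  proof (intro exI[of _ b] conjI allI)
    show "strict_mono b" unfolding strict_mono_def b_def
      by (auto intro!: divide_strict_left_mono)
    fix n show "b n \<in> UU" unfolding b_def by (intro below) simp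
  next
    have "AE x in M. x \<notin> {B..}" by (rule AE_not_in[OF notUU_null[OF BnotU]])
    then show "AE x in M. \<exists>n. x < b n"
    proof eventually_elim
      fix x assume "x \<notin> {B..}"
      then have "0 < B - x" by simp
      then obtain n where "inverse (real (Suc n)) < B - x"
        using reals_Archimedean by blast
      then have "x < b n" unfolding b_def by (simp add: field_simps)
      then show "\<exists>n. x < b n" by blast
    qed
  qed
qed

lemma AE_UU: "AE x in M. x \<in> UU"
proof -
  from seq_exists obtain b :: "nat \<Rightarrow> real" where bb: "strict_mono b \<and> (\<forall>n. b n \<in> UU) \<and> (AE x in M. \<exists>n. x < b n)" ..
  have b2: "\<forall>n. b n \<in> UU" using bb by (rule conjunct1[OF conjunct2])
  have b3: "AE x in M. \<exists>n. x < b n" using bb by (rule conjunct2[OF conjunct2])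
  from b3 show ?thesis
  proof eventually_elim
    fix x assume "\<exists>n. x < b n"
    then obtain n where "x < b n" by blast
    then show "x \<in> UU" using b2 UU_down[of x "b n"] by simp
  qed
qed

end

context khm begin

declare aa_m[measurable] cc_m[measurable] dd_m[measurable] DD_m[measurable] ps_meas[measurable] UU_borel[measurable]

definition sq :: "(real \<Rightarrow> real) \<Rightarrow> bool" where
  "sq g \<longleftrightarrow> g \<in> borel_measurable borel \<and> integrable M (\<lambda>x. (g x)^2)"

lemma sq_meas: "sq g \<Longrightarrow> g \<in> borel_measurable borel" unfolding sq_def by simp
lemma sq_int: "sq g \<Longrightarrow> integrable M g" unfolding sq_def using sq_int_imp_int by blast
lemma sq_prod: "sq g \<Longrightarrow> sq k \<Longrightarrow> integrable M (\<lambda>x. g x * k x)"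
  unfolding sq_def using prod_int by blast
lemma sq_sq: "sq g \<Longrightarrow> integrable M (\<lambda>x. (g x)^2)" unfolding sq_def by simp

lemma int_bmult:
  fixes g h :: "real \<Rightarrow> real"
  assumes "integrable M g" "h \<in> borel_measurable borel" "\<And>x. \<bar>h x\<bar> \<le> C"
  shows "integrable M (\<lambda>x. h x * g x)"
proof (rule Bochner_Integration.integrable_bound[where f="\<lambda>x. C * \<bar>g x\<bar>"])
  show "integrable M (\<lambda>x. C * \<bar>g x\<bar>)" using assms by simp
  show "AE x in M. norm (h x * g x) \<le> norm (C * \<bar>g x\<bar>)"
  proof (intro AE_I2)
    fix x
    have C: "0 \<le> C" using assms(3)[of x] by simp
    have "\<bar>h x\<bar> * \<bar>g x\<bar> \<le> C * \<bar>g x\<bar>" using assms(3)[of x] by (intro mult_right_mono) auto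
    then show "norm (h x * g x) \<le> norm (C * \<bar>g x\<bar>)" using C by (simp add: abs_mult)
  qed
  have "g \<in> borel_measurable borel" using borel_measurable_integrable[OF assms(1)] by simp
  then show "(\<lambda>x. h x * g x) \<in> borel_measurable M" using assms(2) by simp
qed

lemma sq_bmult:
  assumes "sq g" "h \<in> borel_measurable borel" "\<And>x. \<bar>h x\<bar> \<le> C"
  shows "sq (\<lambda>x. h x * g x)"
  unfolding sq_def
proof
  show "(\<lambda>x. h x * g x) \<in> borel_measurable borel" using assms sq_meas by measurable
  have "\<bar>(h x)^2\<bar> \<le> C^2" for x
  proof -
    have "\<bar>h x\<bar>^2 \<le> C^2" by (rule power_mono) (use assms(3)[of x] in auto)
    then show ?thesis by simp
  qed
  then have "integrable M (\<lambda>x. (h x)^2 * (g x)^2)"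
    using assms by (intro int_bmult[of _ _ "C^2"]) (auto simp: sq_sq)
  then show "integrable M (\<lambda>x. (h x * g x)^2)" by (simp add: power_mult_distrib)
qed

lemma sq_const: "sq (\<lambda>x. c)" unfolding sq_def by simp
lemma sq_ps: "sq ps" unfolding sq_def using ps2_int by simp

lemma sq_add:
  assumes "sq g" "sq k" shows "sq (\<lambda>x. g x + k x)"
  unfolding sq_def
proof
  show "(\<lambda>x. g x + k x) \<in> borel_measurable borel" using assms sq_meas by measurable
  have "integrable M (\<lambda>x. (g x)^2 + 2 * (g x * k x) + (k x)^2)"
    using assms by (intro Bochner_Integration.integrable_add integrable_mult_right) (auto simp: sq_sq sq_prod)
  moreover have "(\<lambda>x. (g x + k x)^2) = (\<lambda>x. (g x)^2 + 2 * (g x * k x) + (k x)^2)"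
    by (simp add: fun_eq_iff power2_eq_square algebra_simps)
  ultimately show "integrable M (\<lambda>x. (g x + k x)^2)" by simp
qed

lemma sq_cmult: "sq g \<Longrightarrow> sq (\<lambda>x. c * g x)"
  using sq_bmult[of g "\<lambda>x. c" "\<bar>c\<bar>"] by simp

lemma sq_diff: "sq g \<Longrightarrow> sq k \<Longrightarrow> sq (\<lambda>x. g x - k x)"
  using sq_add[of g "\<lambda>x. (-1) * k x"] sq_cmult[of k "-1"] by simp

lemma sq_mult_sq_int: "sq g \<Longrightarrow> sq k \<Longrightarrow> sq l \<Longrightarrow> h \<in> borel_measurable borel \<Longrightarrow> (\<And>x. \<bar>h x\<bar> \<le> C) \<Longrightarrow>
   integrable M (\<lambda>x. h x * g x * k x)"
  using sq_prod[OF sq_bmult[of g h C]] by (simp add: mult.assoc)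

definition G1 :: "(real \<Rightarrow> real) \<Rightarrow> real \<Rightarrow> real" where
  "G1 \<phi> z = \<phi> z * (dd z - cc z * ps z) / DD z"
definition G2 :: "(real \<Rightarrow> real) \<Rightarrow> real \<Rightarrow> real" where
  "G2 \<phi> z = \<phi> z * (aa z * ps z - cc z) / DD z"
definition u1 :: "(real \<Rightarrow> real) \<Rightarrow> real \<Rightarrow> real" where
  "u1 \<phi> y = (LINT z|M. indicator {..y} z * G1 \<phi> z)"
definition u2 :: "(real \<Rightarrow> real) \<Rightarrow> real \<Rightarrow> real" where
  "u2 \<phi> y = (LINT z|M. indicator {..y} z * G2 \<phi> z)"
definition LL :: "(real \<Rightarrow> real) \<Rightarrow> real \<Rightarrow> real" where
  "LL \<phi> y = \<phi> y - (u1 \<phi> y + u2 \<phi> y * ps y)"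

lemma G1_m[measurable]: assumes [measurable]: "\<phi> \<in> borel_measurable borel" shows "G1 \<phi> \<in> borel_measurable borel"
proof -
  note [measurable] = aa_m cc_m dd_m DD_m ps_meas
  show ?thesis unfolding G1_def by measurable
qed
lemma G2_m[measurable]: assumes [measurable]: "\<phi> \<in> borel_measurable borel" shows "G2 \<phi> \<in> borel_measurable borel"
proof -
  note [measurable] = aa_m cc_m dd_m DD_m ps_meas
  show ?thesis unfolding G2_def by measurable
qed
lemma u1_m[measurable]: "\<phi> \<in> borel_measurable borel \<Longrightarrow> u1 \<phi> \<in> borel_measurable borel"
  unfolding u1_def[abs_def] by (rule meas_head) measurable
lemma u2_m[measurable]: "\<phi> \<in> borel_measurable borel \<Longrightarrow> u2 \<phi> \<in> borel_measurable borel"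
  unfolding u2_def[abs_def] by (rule meas_head) measurable
lemma LL_m[measurable]: assumes [measurable]: "\<phi> \<in> borel_measurable borel" shows "LL \<phi> \<in> borel_measurable borel"
proof -
  note [measurable] = u1_m[OF assms] u2_m[OF assms] ps_meas
  show ?thesis unfolding LL_def[abs_def] by measurable
qed

definition "K1c = (LINT x|M. \<bar>ps x\<bar>)"
definition "K2c = (LINT x|M. (ps x)^2)"

lemma K_nonneg: "0 \<le> K1c" "0 \<le> K2c"
  unfolding K1c_def K2c_def by (auto intro!: integral_nonneg_AE)

lemma G1_bound:
  assumes "z \<le> b" "b \<in> UU"
  shows "\<bar>G1 \<phi> z\<bar> \<le> (K2c * \<bar>\<phi> z\<bar> + K1c * \<bar>\<phi> z * ps z\<bar>) / DD b"
proof -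
  have Db: "0 < DD b" using UU_DD_pos assms by simp
  have Dz: "DD b \<le> DD z" using DD_mono assms by simp
  have "\<bar>dd z - cc z * ps z\<bar> \<le> K2c + K1c * \<bar>ps z\<bar>"
  proof -
    have "\<bar>dd z - cc z * ps z\<bar> \<le> \<bar>dd z\<bar> + \<bar>cc z\<bar> * \<bar>ps z\<bar>" by (metis abs_mult abs_triangle_ineq4)
    also have "\<dots> \<le> K2c + K1c * \<bar>ps z\<bar>"
      using dd_le[of z] dd_nonneg[of z] cc_le[of z] unfolding K1c_def K2c_def
      by (intro add_mono mult_right_mono) auto
    finally show ?thesis .
  qed
  then have "\<bar>\<phi> z\<bar> * \<bar>dd z - cc z * ps z\<bar> \<le> \<bar>\<phi> z\<bar> * (K2c + K1c * \<bar>ps z\<bar>)"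
    by (rule mult_left_mono) simp
  then have num: "\<bar>\<phi> z * (dd z - cc z * ps z)\<bar> \<le> K2c * \<bar>\<phi> z\<bar> + K1c * \<bar>\<phi> z * ps z\<bar>"
    by (simp only: abs_mult distrib_left mult.commute mult.left_commute)
  have "\<bar>G1 \<phi> z\<bar> = \<bar>\<phi> z * (dd z - cc z * ps z)\<bar> / DD z"
    unfolding G1_def using Db Dz by simp
  also have "\<dots> \<le> (K2c * \<bar>\<phi> z\<bar> + K1c * \<bar>\<phi> z * ps z\<bar>) / DD z"
    using num Db Dz by (intro divide_right_mono) auto
  also have "\<dots> \<le> (K2c * \<bar>\<phi> z\<bar> + K1c * \<bar>\<phi> z * ps z\<bar>) / DD b"
    using Db Dz K_nonneg by (intro divide_left_mono) auto
  finally show ?thesis .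
qed

lemma G2_bound:
  assumes "z \<le> b" "b \<in> UU"
  shows "\<bar>G2 \<phi> z\<bar> \<le> (\<bar>\<phi> z * ps z\<bar> + K1c * \<bar>\<phi> z\<bar>) / DD b"
proof -
  have Db: "0 < DD b" using UU_DD_pos assms by simp
  have Dz: "DD b \<le> DD z" using DD_mono assms by simp
  have "\<bar>aa z * ps z - cc z\<bar> \<le> \<bar>ps z\<bar> + K1c"
  proof -
    have "\<bar>aa z * ps z - cc z\<bar> \<le> \<bar>aa z\<bar> * \<bar>ps z\<bar> + \<bar>cc z\<bar>" by (metis abs_mult abs_triangle_ineq4)
    also have "\<dots> \<le> 1 * \<bar>ps z\<bar> + K1c"
      using aa_le1[of z] aa_nonneg[of z] cc_le[of z] unfolding K1c_def
      by (intro add_mono mult_right_mono) auto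
    finally show ?thesis by simp
  qed
  then have "\<bar>\<phi> z\<bar> * \<bar>aa z * ps z - cc z\<bar> \<le> \<bar>\<phi> z\<bar> * (\<bar>ps z\<bar> + K1c)"
    by (rule mult_left_mono) simp
  then have num: "\<bar>\<phi> z * (aa z * ps z - cc z)\<bar> \<le> \<bar>\<phi> z * ps z\<bar> + K1c * \<bar>\<phi> z\<bar>"
    by (simp only: abs_mult distrib_left mult.commute mult.left_commute)
  have "\<bar>G2 \<phi> z\<bar> = \<bar>\<phi> z * (aa z * ps z - cc z)\<bar> / DD z"
    unfolding G2_def using Db Dz by simp
  also have "\<dots> \<le> (\<bar>\<phi> z * ps z\<bar> + K1c * \<bar>\<phi> z\<bar>) / DD z"
    using num Db Dz by (intro divide_right_mono) auto
  also have "\<dots> \<le> (\<bar>\<phi> z * ps z\<bar> + K1c * \<bar>\<phi> z\<bar>) / DD b"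
    using Db Dz K_nonneg by (intro divide_left_mono) auto
  finally show ?thesis .
qed

lemma G1_int:
  assumes "sq \<phi>" "b \<in> UU"
  shows "integrable M (\<lambda>z. indicator {..b} z * G1 \<phi> z)"
proof (rule Bochner_Integration.integrable_bound[where f="\<lambda>z. (K2c * \<bar>\<phi> z\<bar> + K1c * \<bar>\<phi> z * ps z\<bar>) / DD b"])
  show "integrable M (\<lambda>z. (K2c * \<bar>\<phi> z\<bar> + K1c * \<bar>\<phi> z * ps z\<bar>) / DD b)"
    using assms sq_int[OF assms(1)] sq_prod[OF assms(1) sq_ps] by simp
  show "AE x in M. norm (indicator {..b} x * G1 \<phi> x) \<le> norm ((K2c * \<bar>\<phi> x\<bar> + K1c * \<bar>\<phi> x * ps x\<bar>) / DD b)"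
  proof (intro AE_I2)
    fix x
    have nn: "0 \<le> (K2c * \<bar>\<phi> x\<bar> + K1c * \<bar>\<phi> x * ps x\<bar>) / DD b"
      using K_nonneg UU_DD_pos[OF assms(2)] by simp
    have "\<bar>indicator {..b} x * G1 \<phi> x\<bar> \<le> (K2c * \<bar>\<phi> x\<bar> + K1c * \<bar>\<phi> x * ps x\<bar>) / DD b"
      using G1_bound[of x b \<phi>] assms nn by (auto simp: indicator_def)
    then show "norm (indicator {..b} x * G1 \<phi> x) \<le> norm ((K2c * \<bar>\<phi> x\<bar> + K1c * \<bar>\<phi> x * ps x\<bar>) / DD b)"
      unfolding real_norm_def abs_of_nonneg[OF nn] .
  qed
qed (use assms sq_meas in simp)

lemma G2_int:
  assumes "sq \<phi>" "b \<in> UU"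
  shows "integrable M (\<lambda>z. indicator {..b} z * G2 \<phi> z)"
proof (rule Bochner_Integration.integrable_bound[where f="\<lambda>z. (\<bar>\<phi> z * ps z\<bar> + K1c * \<bar>\<phi> z\<bar>) / DD b"])
  show "integrable M (\<lambda>z. (\<bar>\<phi> z * ps z\<bar> + K1c * \<bar>\<phi> z\<bar>) / DD b)"
    using assms sq_int[OF assms(1)] sq_prod[OF assms(1) sq_ps] by simp
  show "AE x in M. norm (indicator {..b} x * G2 \<phi> x) \<le> norm ((\<bar>\<phi> x * ps x\<bar> + K1c * \<bar>\<phi> x\<bar>) / DD b)"
  proof (intro AE_I2)
    fix x
    have nn: "0 \<le> (\<bar>\<phi> x * ps x\<bar> + K1c * \<bar>\<phi> x\<bar>) / DD b"
      using K_nonneg UU_DD_pos[OF assms(2)] by simp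
    have "\<bar>indicator {..b} x * G2 \<phi> x\<bar> \<le> (\<bar>\<phi> x * ps x\<bar> + K1c * \<bar>\<phi> x\<bar>) / DD b"
      using G2_bound[of x b \<phi>] assms nn by (auto simp: indicator_def)
    then show "norm (indicator {..b} x * G2 \<phi> x) \<le> norm ((\<bar>\<phi> x * ps x\<bar> + K1c * \<bar>\<phi> x\<bar>) / DD b)"
      unfolding real_norm_def abs_of_nonneg[OF nn] .
  qed
qed (use assms sq_meas in simp)

end

context khm begin

definition V1 :: "real^2" where "V1 = vector [1, 0]"
definition V2 :: "real^2" where "V2 = vector [0, 1]"

lemma V_comp[simp]: "V1 $ 1 = 1" "V1 $ 2 = 0" "V2 $ 1 = 0" "V2 $ 2 = 1"
  by (simp_all add: V1_def V2_def)

lemma hvec_eq: "hvec f f' y = V1 + ps y *\<^sub>R V2"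
  by (simp add: hvec_def vec_eq_iff forall_2)

lemma vmul_hvec: "hvec f f' z v* C = C$1 + ps z *\<^sub>R C$2"
  by (simp add: hvec_eq vector_matrix_mult_def vec_eq_iff forall_2 sum_2)

definition KK :: "(real \<Rightarrow> real) \<Rightarrow> real \<Rightarrow> real^2" where
  "KK \<phi> z = \<phi> z *\<^sub>R (hvec f f' z v* matrix_inv (Gam f f' z))"

lemma KK_UU:
  assumes "z \<in> UU"
  shows "KK \<phi> z = G1 \<phi> z *\<^sub>R V1 + G2 \<phi> z *\<^sub>R V2"
proof -
  have D: "DD z \<noteq> 0" using UU_DD[OF assms] .
  have "matrix_inv (Gam f f' z) = inv2 (Gam f f' z)"
    by (rule matrix_inv_2) (use D in \<open>simp add: Gam_comp DD_def power2_eq_square\<close>)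
  then have mi: "matrix_inv (Gam f f' z) $ 1 $ 1 = dd z / DD z" "matrix_inv (Gam f f' z) $ 1 $ 2 = - cc z / DD z"
    "matrix_inv (Gam f f' z) $ 2 $ 1 = - cc z / DD z" "matrix_inv (Gam f f' z) $ 2 $ 2 = aa z / DD z"
    by (simp_all add: inv2_def Let_def Gam_comp DD_def power2_eq_square)
  show ?thesis
    unfolding KK_def vmul_hvec using D
    by (simp add: mi vec_eq_iff forall_2 G1_def G2_def field_simps)
qed

lemma KK_notUU:
  assumes "z \<notin> UU"
  shows "KK \<phi> z = \<phi> z *\<^sub>R (matrix_inv (0::real^2^2) $ 1 + ps z *\<^sub>R matrix_inv (0::real^2^2) $ 2)"
  unfolding KK_def vmul_hvec notUU_Gam[OF assms] ..

lemma KK_eq: "KK \<phi> = (\<lambda>z. if z \<in> UU then G1 \<phi> z *\<^sub>R V1 + G2 \<phi> z *\<^sub>R V2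
     else \<phi> z *\<^sub>R (matrix_inv (0::real^2^2) $ 1 + ps z *\<^sub>R matrix_inv (0::real^2^2) $ 2))"
  using KK_UU KK_notUU by (auto simp: fun_eq_iff)

lemma KK_m:
  assumes [measurable]: "\<phi> \<in> borel_measurable borel"
  shows "KK \<phi> \<in> borel_measurable borel"
proof -
  note [measurable] = G1_m[OF assms] G2_m[OF assms] ps_meas UU_borel
  show ?thesis unfolding KK_eq by measurable
qed

lemma meas_head_vec:
  fixes g :: "real \<Rightarrow> 'b::{banach, second_countable_topology}"
  assumes [measurable]: "g \<in> borel_measurable borel"
  shows "(\<lambda>y. LINT x|M. indicator {..y} x *\<^sub>R g x) \<in> borel_measurable borel"
proof -
  have "(\<lambda>(y, x). indicator {..y} x *\<^sub>R g x) \<in> borel_measurable (borel \<Otimes>\<^sub>M (borel::real measure))"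
  proof -
    have "(\<lambda>(y, x). indicator {..y} x *\<^sub>R g x) = (\<lambda>p::real\<times>real. (if snd p \<le> fst p then 1 else 0) *\<^sub>R g (snd p))"
      by (auto simp: fun_eq_iff indicator_def)
    also have "\<dots> \<in> borel_measurable (borel \<Otimes>\<^sub>M borel)" by measurable
    finally show ?thesis .
  qed
  then have "(\<lambda>(y, x). indicator {..y} x *\<^sub>R g x) \<in> borel_measurable (borel \<Otimes>\<^sub>M M)"
    by (simp only: measurable_cong_sets[OF sets_pair_measure_cong[OF refl sets_M] refl])
  then show ?thesis
    using P.borel_measurable_lebesgue_integral[of "\<lambda>y x. indicator {..y} x *\<^sub>R g x" borel] by simp
qed

lemma Lop_alt: "Lop f f' \<phi> y = \<phi> y - (LINT z|M. indicator {..y} z *\<^sub>R KK \<phi> z) \<bullet> hvec f f' y"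
  unfolding Lop_def KK_def set_lebesgue_integral_def ..

lemma Lop_m:
  assumes [measurable]: "\<phi> \<in> borel_measurable borel"
  shows "Lop f f' \<phi> \<in> borel_measurable borel"
proof -
  note [measurable] = meas_head_vec[OF KK_m[OF assms]] ps_meas
  have e: "Lop f f' \<phi> = (\<lambda>y. \<phi> y - (LINT z|M. indicator {..y} z *\<^sub>R KK \<phi> z) \<bullet> (V1 + ps y *\<^sub>R V2))"
    by (simp add: fun_eq_iff Lop_alt hvec_eq)
  show ?thesis unfolding e by measurable
qed

lemma Lop_LL:
  assumes "sq \<phi>" "y \<in> UU"
  shows "Lop f f' \<phi> y = LL \<phi> y"
proof -
  have pw: "indicator {..y} z *\<^sub>R KK \<phi> z = (indicator {..y} z * G1 \<phi> z) *\<^sub>R V1 + (indicator {..y} z * G2 \<phi> z) *\<^sub>R V2" for z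
  proof (cases "z \<le> y")
    case True
    then have "z \<in> UU" using UU_down assms(2) by blast
    then show ?thesis using True by (simp add: KK_UU)
  qed simp
  have i1: "integrable M (\<lambda>z. indicator {..y} z * G1 \<phi> z)" by (rule G1_int[OF assms])
  have i2: "integrable M (\<lambda>z. indicator {..y} z * G2 \<phi> z)" by (rule G2_int[OF assms])
  have "(LINT z|M. indicator {..y} z *\<^sub>R KK \<phi> z) = u1 \<phi> y *\<^sub>R V1 + u2 \<phi> y *\<^sub>R V2"
    unfolding pw u1_def u2_def using i1 i2 by simp
  then show ?thesis
    unfolding Lop_alt LL_def hvec_eq
    by (simp add: inner_vec_def sum_2 algebra_simps)
qed

lemma Lop_LL_AE: "sq \<phi> \<Longrightarrow> AE y in M. Lop f f' \<phi> y = LL \<phi> y"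
  using AE_UU by eventually_elim (simp add: Lop_LL)

end

context khm begin

lemma prod_integrable:
  fixes k g :: "real \<Rightarrow> real"
  assumes k: "integrable M k" and g: "integrable M g"
  shows "integrable (M \<Otimes>\<^sub>M M) (\<lambda>(z, s). k z * g s)"
proof -
  interpret PP: pair_sigma_finite M M ..
  note [measurable] = borel_measurable_integrable[OF k] borel_measurable_integrable[OF g]
  show ?thesis
  proof (rule PP.Fubini_integrable)
    show "(\<lambda>(z, s). k z * g s) \<in> borel_measurable (M \<Otimes>\<^sub>M M)" by measurable
    have "integrable M (\<lambda>z. \<bar>k z\<bar> * (LINT s|M. \<bar>g s\<bar>))" using k by simp
    then show "integrable M (\<lambda>x. LINT y|M. norm (case (x, y) of (z, s) \<Rightarrow> k z * g s))"
      by (simp add: abs_mult)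
    show "AE x in M. integrable M (\<lambda>y. case (x, y) of (z, s) \<Rightarrow> k z * g s)"
      using g by simp
  qed
qed

lemma TRI:
  fixes k g :: "real \<Rightarrow> real"
  assumes k: "integrable M (\<lambda>z. indicator {..b} z * k z)"
    and g: "integrable M (\<lambda>s. indicator {..b} s * g s)"
  shows "(LINT z|M. indicator {..b} z * k z * (LINT s|M. indicator {..z} s * g s))
       = (LINT s|M. indicator {..b} s * g s * (LINT z|M. indicator {s..b} z * k z))"
proof -
  interpret PP: pair_sigma_finite M M ..
  define Hf where "Hf z s = (indicator {..b} z * k z) * (if s \<le> z then 1 else 0) * (indicator {..b} s * g s)" for z s :: real
  have e1: "Hf z s = (indicator {..b} z * k z) * (indicator {..z} s * g s)" for z s
    unfolding Hf_def by (auto simp: indicator_def)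
  have e2: "Hf z s = (indicator {..b} s * g s) * (indicator {s..b} z * k z)" for z s
    unfolding Hf_def by (auto simp: indicator_def)
  note [measurable] = borel_measurable_integrable[OF k] borel_measurable_integrable[OF g]
  have int: "integrable (M \<Otimes>\<^sub>M M) (\<lambda>(z, s). Hf z s)"
  proof (rule Bochner_Integration.integrable_bound[OF prod_integrable[OF k g]])
    define kb where "kb z = indicator {..b} z * k z" for z :: real
    define gb where "gb s = indicator {..b} s * g s" for s :: real
    have [measurable]: "kb \<in> borel_measurable borel" "gb \<in> borel_measurable borel"
      unfolding kb_def[abs_def] gb_def[abs_def] using borel_measurable_integrable[OF k] borel_measurable_integrable[OF g] by simp_all
    have "(\<lambda>(z, s). kb z * (if s \<le> z then 1 else 0) * gb s) \<in> borel_measurable (borel \<Otimes>\<^sub>M borel)"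
      by measurable
    then show "(\<lambda>(z, s). Hf z s) \<in> borel_measurable (M \<Otimes>\<^sub>M M)"
      unfolding Hf_def kb_def gb_def
      by (simp only: measurable_cong_sets[OF sets_pair_measure_cong[OF sets_M sets_M] refl])
    show "AE x in M \<Otimes>\<^sub>M M. norm (case x of (z, s) \<Rightarrow> Hf z s)
        \<le> norm (case x of (z, s) \<Rightarrow> indicator {..b} z * k z * (indicator {..b} s * g s))"
      by (intro AE_I2) (auto simp: Hf_def abs_mult)
  qed
  have "(LINT z|M. indicator {..b} z * k z * (LINT s|M. indicator {..z} s * g s)) = (LINT z|M. LINT s|M. Hf z s)"
    unfolding e1 by simp
  also have "\<dots> = (LINT s|M. LINT z|M. Hf z s)"
    using PP.Fubini_integral[OF int] by simp
  also have "\<dots> = (LINT s|M. indicator {..b} s * g s * (LINT z|M. indicator {s..b} z * k z))"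
    unfolding e2 by simp
  finally show ?thesis .
qed

lemma point_AE: "AE x in M. x \<noteq> b"
  using AE_not_in[of "{b}" M] by (simp add: null_sets_def)

lemma seg_tail:
  fixes k :: "real \<Rightarrow> real"
  assumes k: "integrable M k" and sb: "s \<le> b"
  shows "(LINT z|M. indicator {s..b} z * k z) = (LINT z|M. indicator {s..} z * k z) - (LINT z|M. indicator {b..} z * k z)"
proof -
  have "(LINT z|M. indicator {s..} z * k z) = (LINT z|M. indicator {s..b} z * k z + indicator {b<..} z * k z)"
    using sb by (intro Bochner_Integration.integral_cong) (auto simp: indicator_def)
  also have "\<dots> = (LINT z|M. indicator {s..b} z * k z) + (LINT z|M. indicator {b<..} z * k z)"
    using k by (intro Bochner_Integration.integral_add ind_int) auto
  also have "(LINT z|M. indicator {b<..} z * k z) = (LINT z|M. indicator {b..} z * k z)"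
    using borel_measurable_integrable[OF k]
    by (intro integral_cong_AE) (auto intro!: eventually_mono[OF point_AE[of b]] simp: indicator_def)
  finally show ?thesis by simp
qed

lemma seg_head:
  fixes k :: "real \<Rightarrow> real"
  assumes k: "integrable M (\<lambda>z. indicator {..b} z * k z)" and sb: "s \<le> b"
  shows "(LINT z|M. indicator {s..b} z * k z) = (LINT z|M. indicator {..b} z * k z) - (LINT z|M. indicator {..s} z * k z)"
proof -
  have km: "(\<lambda>z. indicator {..b} z * k z) \<in> borel_measurable borel"
    using borel_measurable_integrable[OF k] by simp
  have eqs: "indicator {..s} z * k z = indicator {..s} z * (indicator {..b} z * k z)" for z
    using sb by (auto simp: indicator_def)
  have eqs2: "indicator {..<s} z * k z = indicator {..<s} z * (indicator {..b} z * k z)" for z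
    using sb by (auto simp: indicator_def)
  have eqs3: "indicator {s..b} z * k z = indicator {s..} z * (indicator {..b} z * k z)" for z
    by (auto simp: indicator_def)
  have i1: "integrable M (\<lambda>z. indicator {..<s} z * (indicator {..b} z * k z))" using ind_int[OF k, of "{..<s}"] by simp
  have "(LINT z|M. indicator {..b} z * k z) = (LINT z|M. indicator {s..b} z * k z + indicator {..<s} z * k z)"
    using sb by (intro Bochner_Integration.integral_cong) (auto simp: indicator_def)
  also have "\<dots> = (LINT z|M. indicator {s..b} z * k z) + (LINT z|M. indicator {..<s} z * k z)"
    unfolding eqs2 eqs3 using ind_int[OF k, of "{s..}"] i1 by (intro Bochner_Integration.integral_add) auto
  also have "(LINT z|M. indicator {..<s} z * k z) = (LINT z|M. indicator {..s} z * k z)"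
    unfolding eqs eqs2 using km
    by (intro integral_cong_AE) (auto intro!: eventually_mono[OF point_AE[of s]] simp: indicator_def)
  finally show ?thesis by simp
qed

end

context khm begin

declare aa_m[measurable] cc_m[measurable] dd_m[measurable] DD_m[measurable] ps_meas[measurable] UU_borel[measurable]

lemma sq_bdd: "h \<in> borel_measurable borel \<Longrightarrow> (\<And>x. \<bar>h x\<bar> \<le> C) \<Longrightarrow> sq h"
  using sq_bmult[OF sq_const[of 1], of h C] by simp

lemma abs_int_le: "\<bar>LINT x|M. g x\<bar> \<le> (LINT x|M. \<bar>g x\<bar>)" for g :: "real \<Rightarrow> real"
  by (rule integral_abs_bound)

lemma tail_bound: "\<bar>LINT x|M. indicator {s..} x * k x\<bar> \<le> (LINT x|M. \<bar>k x\<bar>)" if "integrable M k" for k :: "real \<Rightarrow> real"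
proof -
  have "\<bar>LINT x|M. indicator {s..} x * k x\<bar> \<le> (LINT x|M. \<bar>indicator {s..} x * k x\<bar>)" by (rule integral_abs_bound)
  also have "\<dots> \<le> (LINT x|M. \<bar>k x\<bar>)"
    using that ind_int[OF that, of "{s..}"] by (intro integral_mono) (auto simp: indicator_def)
  finally show ?thesis .
qed

lemma TRI_tail:
  fixes k g :: "real \<Rightarrow> real"
  assumes k: "integrable M k" and g: "integrable M (\<lambda>s. indicator {..b} s * g s)"
  shows "(LINT z|M. indicator {..b} z * k z * (LINT s|M. indicator {..z} s * g s))
       = (LINT s|M. indicator {..b} s * g s * (LINT x|M. indicator {s..} x * k x))
         - (LINT x|M. indicator {b..} x * k x) * (LINT s|M. indicator {..b} s * g s)"
proof -
  define T where "T s = (LINT x|M. indicator {s..} x * k x)" for s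
  have Tm: "T \<in> borel_measurable borel" unfolding T_def[abs_def]
    by (rule meas_tail) (use borel_measurable_integrable[OF k] in simp)
  have Tb: "\<bar>T s\<bar> \<le> (LINT x|M. \<bar>k x\<bar>)" for s unfolding T_def by (rule tail_bound[OF k])
  have "(LINT z|M. indicator {..b} z * k z * (LINT s|M. indicator {..z} s * g s))
       = (LINT s|M. indicator {..b} s * g s * (LINT z|M. indicator {s..b} z * k z))"
    by (rule TRI) (use ind_int[OF k] g in auto)
  also have "\<dots> = (LINT s|M. T s * (indicator {..b} s * g s) - T b * (indicator {..b} s * g s))"
  proof (rule Bochner_Integration.integral_cong[OF refl])
    fix s show "indicator {..b} s * g s * (LINT z|M. indicator {s..b} z * k z) = T s * (indicator {..b} s * g s) - T b * (indicator {..b} s * g s)"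
    proof (cases "s \<le> b")
      case True
      have e: "(LINT z|M. indicator {s..b} z * k z) = T s - T b" unfolding T_def by (rule seg_tail[OF k True])
      show ?thesis unfolding e using True by (simp add: algebra_simps)
    qed simp
  qed
  also have "\<dots> = (LINT s|M. T s * (indicator {..b} s * g s)) - T b * (LINT s|M. indicator {..b} s * g s)"
    using int_bmult[OF g Tm Tb] g by simp
  finally show ?thesis unfolding T_def by (simp add: mult.commute mult.left_commute)
qed

lemma TRI_head:
  fixes k g :: "real \<Rightarrow> real"
  assumes k: "integrable M (\<lambda>z. indicator {..b} z * k z)" and g: "integrable M (\<lambda>s. indicator {..b} s * g s)"
  shows "(LINT z|M. indicator {..b} z * k z * (LINT s|M. indicator {..z} s * g s))
       = (LINT x|M. indicator {..b} x * k x) * (LINT s|M. indicator {..b} s * g s)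
         - (LINT s|M. indicator {..b} s * g s * (LINT x|M. indicator {..s} x * k x))"
proof -
  define W where "W s = indicator {..b} s * (LINT x|M. indicator {..s} x * k x)" for s
  have km: "(\<lambda>z. indicator {..b} z * k z) \<in> borel_measurable borel"
    using borel_measurable_integrable[OF k] by simp
  have Wm: "W \<in> borel_measurable borel"
  proof -
    have e: "W = (\<lambda>s. indicator {..b} s * (LINT x|M. indicator {..s} x * (indicator {..b} x * k x)))"
      by (auto simp: fun_eq_iff W_def indicator_def intro!: Bochner_Integration.integral_cong)
    show ?thesis unfolding e using meas_head[OF km] by measurable
  qed
  have Wb: "\<bar>W s\<bar> \<le> (LINT x|M. \<bar>indicator {..b} x * k x\<bar>)" for s
  proof (cases "s \<le> b")
    case True
    have "\<bar>W s\<bar> = \<bar>LINT x|M. indicator {..s} x * (indicator {..b} x * k x)\<bar>"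
      unfolding W_def using True by (auto simp: indicator_def intro!: arg_cong[where f=abs] Bochner_Integration.integral_cong)
    also have "\<dots> \<le> (LINT x|M. \<bar>indicator {..s} x * (indicator {..b} x * k x)\<bar>)" by (rule integral_abs_bound)
    also have "\<dots> \<le> (LINT x|M. \<bar>indicator {..b} x * k x\<bar>)"
      using k ind_int[OF k, of "{..s}"] by (intro integral_mono) (auto simp: indicator_def)
    finally show ?thesis .
  qed (auto simp: W_def intro!: integral_nonneg_AE)
  have "(LINT z|M. indicator {..b} z * k z * (LINT s|M. indicator {..z} s * g s))
       = (LINT s|M. indicator {..b} s * g s * (LINT z|M. indicator {s..b} z * k z))"
    by (rule TRI) (use k g in auto)
  also have "\<dots> = (LINT s|M. (LINT x|M. indicator {..b} x * k x) * (indicator {..b} s * g s) - W s * (indicator {..b} s * g s))"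
  proof (rule Bochner_Integration.integral_cong[OF refl])
    fix s show "indicator {..b} s * g s * (LINT z|M. indicator {s..b} z * k z) = (LINT x|M. indicator {..b} x * k x) * (indicator {..b} s * g s) - W s * (indicator {..b} s * g s)"
    proof (cases "s \<le> b")
      case True
      have e: "(LINT z|M. indicator {s..b} z * k z) = (LINT x|M. indicator {..b} x * k x) - (LINT x|M. indicator {..s} x * k x)"
        by (rule seg_head[OF k True])
      show ?thesis unfolding e W_def using True by (simp add: algebra_simps)
    qed (simp add: W_def)
  qed
  also have "\<dots> = (LINT x|M. indicator {..b} x * k x) * (LINT s|M. indicator {..b} s * g s) - (LINT s|M. W s * (indicator {..b} s * g s))"
    using int_bmult[OF g Wm Wb] g by simp
  also have "(LINT s|M. W s * (indicator {..b} s * g s)) = (LINT s|M. indicator {..b} s * g s * (LINT x|M. indicator {..s} x * k x))"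
    by (intro Bochner_Integration.integral_cong) (auto simp: W_def indicator_def)
  finally show ?thesis .
qed

lemma alg1: assumes "s \<in> UU" shows "G1 \<phi> s * aa s + G2 \<phi> s * cc s = \<phi> s"
proof -
  have D: "DD s \<noteq> 0" using UU_DD[OF assms] .
  have "G1 \<phi> s * aa s + G2 \<phi> s * cc s = (\<phi> s * ((dd s - cc s * ps s) * aa s + (aa s * ps s - cc s) * cc s)) / DD s"
    unfolding G1_def G2_def by (simp only: times_divide_eq_left add_divide_distrib[symmetric]) (simp add: algebra_simps)
  also have "(dd s - cc s * ps s) * aa s + (aa s * ps s - cc s) * cc s = DD s"
    unfolding DD_def by (simp add: power2_eq_square algebra_simps)
  finally show ?thesis using D by simp
qed

lemma alg2: assumes "s \<in> UU" shows "G1 \<phi> s * cc s + G2 \<phi> s * dd s = \<phi> s * ps s"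
proof -
  have D: "DD s \<noteq> 0" using UU_DD[OF assms] .
  have "G1 \<phi> s * cc s + G2 \<phi> s * dd s = (\<phi> s * ((dd s - cc s * ps s) * cc s + (aa s * ps s - cc s) * dd s)) / DD s"
    unfolding G1_def G2_def by (simp only: times_divide_eq_left add_divide_distrib[symmetric]) (simp add: algebra_simps)
  also have "(dd s - cc s * ps s) * cc s + (aa s * ps s - cc s) * dd s = DD s * ps s"
    unfolding DD_def by (simp add: power2_eq_square algebra_simps)
  finally show ?thesis using D by simp
qed

end

context khm begin

declare aa_m[measurable] cc_m[measurable] dd_m[measurable] DD_m[measurable] ps_meas[measurable] UU_borel[measurable]

lemma u1_bnd:
  assumes "sq \<phi>" "b \<in> UU"
  shows "\<bar>indicator {..b} z * u1 \<phi> z\<bar> \<le> (LINT s|M. \<bar>indicator {..b} s * G1 \<phi> s\<bar>)"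
proof (cases "z \<le> b")
  case True
  then have zU: "z \<in> UU" using UU_down assms by blast
  have "\<bar>u1 \<phi> z\<bar> \<le> (LINT s|M. \<bar>indicator {..z} s * G1 \<phi> s\<bar>)" unfolding u1_def by (rule integral_abs_bound)
  also have "\<dots> \<le> (LINT s|M. \<bar>indicator {..b} s * G1 \<phi> s\<bar>)"
    using G1_int[OF assms(1) zU] G1_int[OF assms] True by (intro integral_mono) (auto simp: indicator_def)
  finally show ?thesis using True by simp
qed (auto intro!: integral_nonneg_AE)

lemma u2_bnd:
  assumes "sq \<phi>" "b \<in> UU"
  shows "\<bar>indicator {..b} z * u2 \<phi> z\<bar> \<le> (LINT s|M. \<bar>indicator {..b} s * G2 \<phi> s\<bar>)"
proof (cases "z \<le> b")
  case True
  then have zU: "z \<in> UU" using UU_down assms by blast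
  have "\<bar>u2 \<phi> z\<bar> \<le> (LINT s|M. \<bar>indicator {..z} s * G2 \<phi> s\<bar>)" unfolding u2_def by (rule integral_abs_bound)
  also have "\<dots> \<le> (LINT s|M. \<bar>indicator {..b} s * G2 \<phi> s\<bar>)"
    using G2_int[OF assms(1) zU] G2_int[OF assms] True by (intro integral_mono) (auto simp: indicator_def)
  finally show ?thesis using True by simp
qed (auto intro!: integral_nonneg_AE)

lemma sq_u1: assumes "sq \<phi>" "b \<in> UU" shows "sq (\<lambda>z. indicator {..b} z * u1 \<phi> z)"
proof (rule sq_bdd[OF _ u1_bnd[OF assms]])
  note [measurable] = u1_m[OF sq_meas[OF assms(1)]]
  show "(\<lambda>z. indicator {..b} z * u1 \<phi> z) \<in> borel_measurable borel" by measurable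
qed
lemma sq_u2: assumes "sq \<phi>" "b \<in> UU" shows "sq (\<lambda>z. indicator {..b} z * u2 \<phi> z)"
proof (rule sq_bdd[OF _ u2_bnd[OF assms]])
  note [measurable] = u2_m[OF sq_meas[OF assms(1)]]
  show "(\<lambda>z. indicator {..b} z * u2 \<phi> z) \<in> borel_measurable borel" by measurable
qed
lemma sq_indb: "sq \<phi> \<Longrightarrow> sq (\<lambda>z. indicator {..b} z * \<phi> z)"
  by (rule sq_bmult[of _ _ 1]) auto

lemma sq_SU: assumes "sq \<phi>" "b \<in> UU"
  shows "sq (\<lambda>z. indicator {..b} z * (u1 \<phi> z + u2 \<phi> z * ps z))"
proof -
  have m: "(\<lambda>z. indicator {..b} z * u2 \<phi> z) \<in> borel_measurable borel"
    using assms(1) sq_meas by measurable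
  have "sq (\<lambda>z. (indicator {..b} z * u2 \<phi> z) * ps z)"
    by (rule sq_bmult[OF sq_ps m u2_bnd[OF assms]])
  then have "sq (\<lambda>z. indicator {..b} z * u1 \<phi> z + (indicator {..b} z * u2 \<phi> z) * ps z)"
    by (intro sq_add sq_u1 assms)
  moreover have "(\<lambda>z. indicator {..b} z * u1 \<phi> z + (indicator {..b} z * u2 \<phi> z) * ps z)
     = (\<lambda>z. indicator {..b} z * (u1 \<phi> z + u2 \<phi> z * ps z))"
    by (auto simp: fun_eq_iff algebra_simps)
  ultimately show ?thesis by simp
qed

lemma sq_SL: assumes "sq \<phi>" "b \<in> UU"
  shows "sq (\<lambda>z. indicator {..b} z * LL \<phi> z)"
proof -
  have "sq (\<lambda>z. indicator {..b} z * \<phi> z - indicator {..b} z * (u1 \<phi> z + u2 \<phi> z * ps z))"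
    by (intro sq_diff sq_SU sq_indb assms)
  moreover have "(\<lambda>z. indicator {..b} z * \<phi> z - indicator {..b} z * (u1 \<phi> z + u2 \<phi> z * ps z))
     = (\<lambda>z. indicator {..b} z * LL \<phi> z)"
    by (auto simp: fun_eq_iff algebra_simps LL_def)
  ultimately show ?thesis by simp
qed

lemma K1:
  assumes phi: "sq \<phi>" and bU: "b \<in> UU"
  shows "(LINT z|M. indicator {..b} z * LL \<phi> z) = aa b * u1 \<phi> b + cc b * u2 \<phi> b"
    and "(LINT z|M. indicator {..b} z * ps z * LL \<phi> z) = cc b * u1 \<phi> b + dd b * u2 \<phi> b"
proof -
  have g1: "integrable M (\<lambda>s. indicator {..b} s * G1 \<phi> s)" by (rule G1_int[OF phi bU])
  have g2: "integrable M (\<lambda>s. indicator {..b} s * G2 \<phi> s)" by (rule G2_int[OF phi bU])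
  have m1: "(\<lambda>s. indicator {..b} s * G1 \<phi> s) \<in> borel_measurable borel" using borel_measurable_integrable[OF g1] by simp
  have m2: "(\<lambda>s. indicator {..b} s * G2 \<phi> s) \<in> borel_measurable borel" using borel_measurable_integrable[OF g2] by simp
  have iphi: "integrable M (\<lambda>z. indicator {..b} z * \<phi> z)" using sq_int[OF sq_indb[OF phi]] .
  have iphips: "integrable M (\<lambda>z. indicator {..b} z * \<phi> z * ps z)" using sq_prod[OF sq_indb[OF phi] sq_ps] .
  have iu1: "integrable M (\<lambda>z. indicator {..b} z * u1 \<phi> z)" using sq_int[OF sq_u1[OF phi bU]] .
  have iu2: "integrable M (\<lambda>z. indicator {..b} z * u2 \<phi> z)" using sq_int[OF sq_u2[OF phi bU]] .
  have iu1p: "integrable M (\<lambda>z. indicator {..b} z * u1 \<phi> z * ps z)" using sq_prod[OF sq_u1[OF phi bU] sq_ps] .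
  have iu2p: "integrable M (\<lambda>z. indicator {..b} z * u2 \<phi> z * ps z)" using sq_prod[OF sq_u2[OF phi bU] sq_ps] .
  have iu2pp: "integrable M (\<lambda>z. indicator {..b} z * u2 \<phi> z * (ps z)^2)"
  proof -
    have "integrable M (\<lambda>z. (indicator {..b} z * u2 \<phi> z) * (ps z)^2)"
      by (rule int_bmult[OF ps2_int _ u2_bnd[OF phi bU]]) (use phi sq_meas in measurable)
    then show ?thesis by (simp add: mult_ac)
  qed
  have aab: "\<bar>aa s\<bar> \<le> 1" for s using aa_nonneg[of s] aa_le1[of s] by simp
  have ccb: "\<bar>cc s\<bar> \<le> K1c" for s using cc_le[of s] unfolding K1c_def .
  have ddb: "\<bar>dd s\<bar> \<le> K2c" for s using dd_le[of s] dd_nonneg[of s] unfolding K2c_def by simp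
  have ig1a: "integrable M (\<lambda>s. indicator {..b} s * G1 \<phi> s * aa s)"
    using int_bmult[OF g1 aa_m aab] by (simp add: mult_ac)
  have ig1c: "integrable M (\<lambda>s. indicator {..b} s * G1 \<phi> s * cc s)"
    using int_bmult[OF g1 cc_m ccb] by (simp add: mult_ac)
  have ig2c: "integrable M (\<lambda>s. indicator {..b} s * G2 \<phi> s * cc s)"
    using int_bmult[OF g2 cc_m ccb] by (simp add: mult_ac)
  have ig2d: "integrable M (\<lambda>s. indicator {..b} s * G2 \<phi> s * dd s)"
    using int_bmult[OF g2 dd_m ddb] by (simp add: mult_ac)
  have T11: "(LINT z|M. indicator {..b} z * u1 \<phi> z) = (LINT s|M. indicator {..b} s * G1 \<phi> s * aa s) - aa b * (LINT s|M. indicator {..b} s * G1 \<phi> s)"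
    using TRI_tail[of "\<lambda>x. 1" b "G1 \<phi>"] g1 unfolding aa_def[symmetric] u1_def[symmetric] by simp
  have T22: "(LINT z|M. indicator {..b} z * ps z * u2 \<phi> z) = (LINT s|M. indicator {..b} s * G2 \<phi> s * cc s) - cc b * (LINT s|M. indicator {..b} s * G2 \<phi> s)"
    using TRI_tail[of ps b "G2 \<phi>"] g2 ps_int unfolding cc_def[symmetric] u2_def[symmetric] by simp
  have T12: "(LINT z|M. indicator {..b} z * ps z * u1 \<phi> z) = (LINT s|M. indicator {..b} s * G1 \<phi> s * cc s) - cc b * (LINT s|M. indicator {..b} s * G1 \<phi> s)"
    using TRI_tail[of ps b "G1 \<phi>"] g1 ps_int unfolding cc_def[symmetric] u1_def[symmetric] by simp
  have T23: "(LINT z|M. indicator {..b} z * (ps z)^2 * u2 \<phi> z) = (LINT s|M. indicator {..b} s * G2 \<phi> s * dd s) - dd b * (LINT s|M. indicator {..b} s * G2 \<phi> s)"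
    using TRI_tail[of "\<lambda>x. (ps x)^2" b "G2 \<phi>"] g2 ps2_int unfolding dd_def[symmetric] u2_def[symmetric] by simp
  have A1: "(LINT s|M. indicator {..b} s * G1 \<phi> s * aa s) + (LINT s|M. indicator {..b} s * G2 \<phi> s * cc s)
      = (LINT s|M. indicator {..b} s * \<phi> s)"
  proof -
    have "(LINT s|M. indicator {..b} s * G1 \<phi> s * aa s) + (LINT s|M. indicator {..b} s * G2 \<phi> s * cc s)
       = (LINT s|M. indicator {..b} s * G1 \<phi> s * aa s + indicator {..b} s * G2 \<phi> s * cc s)"
      using ig1a ig2c by simp
    also have "\<dots> = (LINT s|M. indicator {..b} s * \<phi> s)"
    proof (rule Bochner_Integration.integral_cong[OF refl])
      fix s show "indicator {..b} s * G1 \<phi> s * aa s + indicator {..b} s * G2 \<phi> s * cc s = indicator {..b} s * \<phi> s"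
      proof (cases "s \<le> b")
        case True
        then have "s \<in> UU" using UU_down bU by blast
        then show ?thesis using alg1[of s \<phi>] True by (simp add: algebra_simps)
      qed simp
    qed
    finally show ?thesis .
  qed
  have A2: "(LINT s|M. indicator {..b} s * G1 \<phi> s * cc s) + (LINT s|M. indicator {..b} s * G2 \<phi> s * dd s)
      = (LINT s|M. indicator {..b} s * \<phi> s * ps s)"
  proof -
    have "(LINT s|M. indicator {..b} s * G1 \<phi> s * cc s) + (LINT s|M. indicator {..b} s * G2 \<phi> s * dd s)
       = (LINT s|M. indicator {..b} s * G1 \<phi> s * cc s + indicator {..b} s * G2 \<phi> s * dd s)"
      using ig1c ig2d by simp
    also have "\<dots> = (LINT s|M. indicator {..b} s * \<phi> s * ps s)"
    proof (rule Bochner_Integration.integral_cong[OF refl])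
      fix s show "indicator {..b} s * G1 \<phi> s * cc s + indicator {..b} s * G2 \<phi> s * dd s = indicator {..b} s * \<phi> s * ps s"
      proof (cases "s \<le> b")
        case True
        then have "s \<in> UU" using UU_down bU by blast
        then show ?thesis using alg2[of s \<phi>] True by (simp add: algebra_simps)
      qed simp
    qed
    finally show ?thesis .
  qed
  have E1: "(LINT z|M. indicator {..b} z * LL \<phi> z) = (LINT z|M. indicator {..b} z * \<phi> z)
      - (LINT z|M. indicator {..b} z * u1 \<phi> z) - (LINT z|M. indicator {..b} z * ps z * u2 \<phi> z)"
  proof -
    have "(LINT z|M. indicator {..b} z * LL \<phi> z) = (LINT z|M. indicator {..b} z * \<phi> z
      - indicator {..b} z * u1 \<phi> z - indicator {..b} z * ps z * u2 \<phi> z)"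
      by (intro Bochner_Integration.integral_cong) (auto simp: LL_def algebra_simps)
    also have "\<dots> = (LINT z|M. indicator {..b} z * \<phi> z)
      - (LINT z|M. indicator {..b} z * u1 \<phi> z) - (LINT z|M. indicator {..b} z * ps z * u2 \<phi> z)"
      using iphi iu1 iu2p by (simp add: mult_ac)
    finally show ?thesis .
  qed
  have E2: "(LINT z|M. indicator {..b} z * ps z * LL \<phi> z) = (LINT z|M. indicator {..b} z * \<phi> z * ps z)
      - (LINT z|M. indicator {..b} z * ps z * u1 \<phi> z) - (LINT z|M. indicator {..b} z * (ps z)^2 * u2 \<phi> z)"
  proof -
    have "(LINT z|M. indicator {..b} z * ps z * LL \<phi> z) = (LINT z|M. indicator {..b} z * \<phi> z * ps z
      - indicator {..b} z * ps z * u1 \<phi> z - indicator {..b} z * (ps z)^2 * u2 \<phi> z)"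
      by (intro Bochner_Integration.integral_cong) (auto simp: LL_def algebra_simps power2_eq_square)
    also have "\<dots> = (LINT z|M. indicator {..b} z * \<phi> z * ps z)
      - (LINT z|M. indicator {..b} z * ps z * u1 \<phi> z) - (LINT z|M. indicator {..b} z * (ps z)^2 * u2 \<phi> z)"
      using iphips iu1p iu2pp by (simp add: mult_ac)
    finally show ?thesis .
  qed
  show "(LINT z|M. indicator {..b} z * LL \<phi> z) = aa b * u1 \<phi> b + cc b * u2 \<phi> b"
    unfolding E1 T11 T22 using A1 unfolding u1_def u2_def by simp
  show "(LINT z|M. indicator {..b} z * ps z * LL \<phi> z) = cc b * u1 \<phi> b + dd b * u2 \<phi> b"
    unfolding E2 T12 T23 using A2 unfolding u1_def u2_def by simp
qed

end

context khm begin

declare aa_m[measurable] cc_m[measurable] dd_m[measurable] DD_m[measurable] ps_meas[measurable] UU_borel[measurable]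

lemma int_eq: "integrable M p \<Longrightarrow> (\<And>x. p x = q x) \<Longrightarrow> integrable M q" for p q :: "real \<Rightarrow> real"
proof -
  assume "integrable M p" "\<And>x. p x = q x"
  moreover have "p = q" using calculation(2) by auto
  ultimately show ?thesis by simp
qed

definition V1f :: "(real \<Rightarrow> real) \<Rightarrow> real \<Rightarrow> real" where "V1f \<phi> s = aa s * u1 \<phi> s + cc s * u2 \<phi> s"
definition V2f :: "(real \<Rightarrow> real) \<Rightarrow> real \<Rightarrow> real" where "V2f \<phi> s = cc s * u1 \<phi> s + dd s * u2 \<phi> s"
definition QQ :: "(real \<Rightarrow> real) \<Rightarrow> real \<Rightarrow> real" where "QQ \<phi> b = V1f \<phi> b * u1 \<phi> b + V2f \<phi> b * u2 \<phi> b"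

lemma K2:
  assumes phi: "sq \<phi>" and bU: "b \<in> UU"
  shows "(LINT z|M. indicator {..b} z * (LL \<phi> z)^2) = (LINT z|M. indicator {..b} z * (\<phi> z)^2) - QQ \<phi> b"
proof -
  have g1: "integrable M (\<lambda>s. indicator {..b} s * G1 \<phi> s)" by (rule G1_int[OF phi bU])
  have g2: "integrable M (\<lambda>s. indicator {..b} s * G2 \<phi> s)" by (rule G2_int[OF phi bU])
  have SL: "sq (\<lambda>z. indicator {..b} z * LL \<phi> z)" by (rule sq_SL[OF phi bU])
  have SU: "sq (\<lambda>z. indicator {..b} z * (u1 \<phi> z + u2 \<phi> z * ps z))" by (rule sq_SU[OF phi bU])
  have SP: "sq (\<lambda>z. indicator {..b} z * \<phi> z)" by (rule sq_indb[OF phi])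
  have kL: "integrable M (\<lambda>z. indicator {..b} z * LL \<phi> z)" by (rule sq_int[OF SL])
  have kLp: "integrable M (\<lambda>z. indicator {..b} z * (ps z * LL \<phi> z))"
    using sq_prod[OF SL sq_ps] by (simp add: mult_ac)
  define C1 where "C1 = (LINT s|M. \<bar>indicator {..b} s * G1 \<phi> s\<bar>)"
  define C2 where "C2 = (LINT s|M. \<bar>indicator {..b} s * G2 \<phi> s\<bar>)"
  have b1: "\<bar>indicator {..b} z * u1 \<phi> z\<bar> \<le> C1" for z unfolding C1_def by (rule u1_bnd[OF phi bU])
  have b2: "\<bar>indicator {..b} z * u2 \<phi> z\<bar> \<le> C2" for z unfolding C2_def by (rule u2_bnd[OF phi bU])
  note [measurable] = u1_m[OF sq_meas[OF phi]] u2_m[OF sq_meas[OF phi]]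
  have h1m: "(\<lambda>s. indicator {..b} s * V1f \<phi> s) \<in> borel_measurable borel" unfolding V1f_def by measurable
  have h2m: "(\<lambda>s. indicator {..b} s * V2f \<phi> s) \<in> borel_measurable borel" unfolding V2f_def by measurable
  have h1b: "\<bar>indicator {..b} s * V1f \<phi> s\<bar> \<le> C1 + K1c * C2" for s
  proof -
    have "\<bar>indicator {..b} s * V1f \<phi> s\<bar> = \<bar>aa s * (indicator {..b} s * u1 \<phi> s) + cc s * (indicator {..b} s * u2 \<phi> s)\<bar>"
      unfolding V1f_def by (simp add: algebra_simps)
    also have "\<dots> \<le> \<bar>aa s\<bar> * \<bar>indicator {..b} s * u1 \<phi> s\<bar> + \<bar>cc s\<bar> * \<bar>indicator {..b} s * u2 \<phi> s\<bar>"
      by (metis abs_mult abs_triangle_ineq)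
    also have "\<dots> \<le> 1 * C1 + K1c * C2"
      using aa_nonneg[of s] aa_le1[of s] cc_le[of s] b1[of s] b2[of s] K_nonneg
      unfolding K1c_def by (intro add_mono mult_mono) auto
    finally show ?thesis by simp
  qed
  have h2b: "\<bar>indicator {..b} s * V2f \<phi> s\<bar> \<le> K1c * C1 + K2c * C2" for s
  proof -
    have "\<bar>indicator {..b} s * V2f \<phi> s\<bar> = \<bar>cc s * (indicator {..b} s * u1 \<phi> s) + dd s * (indicator {..b} s * u2 \<phi> s)\<bar>"
      unfolding V2f_def by (simp add: algebra_simps)
    also have "\<dots> \<le> \<bar>cc s\<bar> * \<bar>indicator {..b} s * u1 \<phi> s\<bar> + \<bar>dd s\<bar> * \<bar>indicator {..b} s * u2 \<phi> s\<bar>"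
      by (metis abs_mult abs_triangle_ineq)
    also have "\<dots> \<le> K1c * C1 + K2c * C2"
      using dd_nonneg[of s] dd_le[of s] cc_le[of s] b1[of s] b2[of s] K_nonneg
      unfolding K1c_def K2c_def by (intro add_mono mult_mono) auto
    finally show ?thesis .
  qed
  have i1: "integrable M (\<lambda>s. indicator {..b} s * G1 \<phi> s * V1f \<phi> s)"
  proof -
    have "integrable M (\<lambda>s. (indicator {..b} s * V1f \<phi> s) * (indicator {..b} s * G1 \<phi> s))"
      by (rule int_bmult[OF g1 h1m h1b])
    then show ?thesis by (rule int_eq) (auto simp: indicator_def)
  qed
  have i2: "integrable M (\<lambda>s. indicator {..b} s * G2 \<phi> s * V2f \<phi> s)"
  proof -
    have "integrable M (\<lambda>s. (indicator {..b} s * V2f \<phi> s) * (indicator {..b} s * G2 \<phi> s))"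
      by (rule int_bmult[OF g2 h2m h2b])
    then show ?thesis by (rule int_eq) (auto simp: indicator_def)
  qed
  have H1: "(LINT z|M. indicator {..b} z * LL \<phi> z * u1 \<phi> z)
     = V1f \<phi> b * u1 \<phi> b - (LINT s|M. indicator {..b} s * G1 \<phi> s * V1f \<phi> s)"
  proof -
    have "(LINT z|M. indicator {..b} z * LL \<phi> z * u1 \<phi> z)
     = (LINT x|M. indicator {..b} x * LL \<phi> x) * (LINT s|M. indicator {..b} s * G1 \<phi> s)
         - (LINT s|M. indicator {..b} s * G1 \<phi> s * (LINT x|M. indicator {..s} x * LL \<phi> x))"
      using TRI_head[OF kL g1] unfolding u1_def[symmetric] .
    also have "(LINT s|M. indicator {..b} s * G1 \<phi> s * (LINT x|M. indicator {..s} x * LL \<phi> x))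
        = (LINT s|M. indicator {..b} s * G1 \<phi> s * V1f \<phi> s)"
    proof (rule Bochner_Integration.integral_cong[OF refl])
      fix s show "indicator {..b} s * G1 \<phi> s * (LINT x|M. indicator {..s} x * LL \<phi> x) = indicator {..b} s * G1 \<phi> s * V1f \<phi> s"
      proof (cases "s \<le> b")
        case True
        then have "s \<in> UU" using UU_down bU by blast
        then show ?thesis unfolding V1f_def using K1(1)[OF phi] by simp
      qed simp
    qed
    finally show ?thesis unfolding K1(1)[OF phi bU] V1f_def u1_def by simp
  qed
  have H2: "(LINT z|M. indicator {..b} z * ps z * LL \<phi> z * u2 \<phi> z)
     = V2f \<phi> b * u2 \<phi> b - (LINT s|M. indicator {..b} s * G2 \<phi> s * V2f \<phi> s)"
  proof -
    have "(LINT z|M. indicator {..b} z * (ps z * LL \<phi> z) * u2 \<phi> z)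
     = (LINT x|M. indicator {..b} x * (ps x * LL \<phi> x)) * (LINT s|M. indicator {..b} s * G2 \<phi> s)
         - (LINT s|M. indicator {..b} s * G2 \<phi> s * (LINT x|M. indicator {..s} x * (ps x * LL \<phi> x)))"
      using TRI_head[OF kLp g2] unfolding u2_def[symmetric] .
    also have "(LINT s|M. indicator {..b} s * G2 \<phi> s * (LINT x|M. indicator {..s} x * (ps x * LL \<phi> x)))
        = (LINT s|M. indicator {..b} s * G2 \<phi> s * V2f \<phi> s)"
    proof (rule Bochner_Integration.integral_cong[OF refl])
      fix s show "indicator {..b} s * G2 \<phi> s * (LINT x|M. indicator {..s} x * (ps x * LL \<phi> x)) = indicator {..b} s * G2 \<phi> s * V2f \<phi> s"
      proof (cases "s \<le> b")
        case True
        then have "s \<in> UU" using UU_down bU by blast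
        then show ?thesis unfolding V2f_def using K1(2)[OF phi] by (simp add: mult.assoc)
      qed simp
    qed
    finally show ?thesis using K1(2)[OF phi bU] unfolding V2f_def u2_def by (simp add: mult.assoc)
  qed
  have PW: "(LINT s|M. indicator {..b} s * G1 \<phi> s * V1f \<phi> s) + (LINT s|M. indicator {..b} s * G2 \<phi> s * V2f \<phi> s)
      = (LINT s|M. (indicator {..b} s * \<phi> s) * (indicator {..b} s * (u1 \<phi> s + u2 \<phi> s * ps s)))"
  proof -
    have "(LINT s|M. indicator {..b} s * G1 \<phi> s * V1f \<phi> s) + (LINT s|M. indicator {..b} s * G2 \<phi> s * V2f \<phi> s)
       = (LINT s|M. indicator {..b} s * G1 \<phi> s * V1f \<phi> s + indicator {..b} s * G2 \<phi> s * V2f \<phi> s)"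
      using i1 i2 by simp
    also have "\<dots> = (LINT s|M. (indicator {..b} s * \<phi> s) * (indicator {..b} s * (u1 \<phi> s + u2 \<phi> s * ps s)))"
    proof (rule Bochner_Integration.integral_cong[OF refl])
      fix s show "indicator {..b} s * G1 \<phi> s * V1f \<phi> s + indicator {..b} s * G2 \<phi> s * V2f \<phi> s
          = (indicator {..b} s * \<phi> s) * (indicator {..b} s * (u1 \<phi> s + u2 \<phi> s * ps s))"
      proof (cases "s \<le> b")
        case True
        then have sU: "s \<in> UU" using UU_down bU by blast
        have "G1 \<phi> s * V1f \<phi> s + G2 \<phi> s * V2f \<phi> s
            = u1 \<phi> s * (G1 \<phi> s * aa s + G2 \<phi> s * cc s) + u2 \<phi> s * (G1 \<phi> s * cc s + G2 \<phi> s * dd s)"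
          unfolding V1f_def V2f_def by (simp add: algebra_simps)
        also have "\<dots> = \<phi> s * (u1 \<phi> s + u2 \<phi> s * ps s)"
          unfolding alg1[OF sU] alg2[OF sU] by (simp add: algebra_simps)
        finally show ?thesis using True by (simp add: algebra_simps)
      qed simp
    qed
    finally show ?thesis .
  qed
  have X: "(LINT z|M. (indicator {..b} z * LL \<phi> z) * (indicator {..b} z * (u1 \<phi> z + u2 \<phi> z * ps z)))
      = QQ \<phi> b - (LINT s|M. (indicator {..b} s * \<phi> s) * (indicator {..b} s * (u1 \<phi> s + u2 \<phi> s * ps s)))"
  proof -
    have iA: "integrable M (\<lambda>z. indicator {..b} z * LL \<phi> z * u1 \<phi> z)"
      using sq_prod[OF SL sq_u1[OF phi bU]] by (rule int_eq) (auto simp: indicator_def)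
    have iB: "integrable M (\<lambda>z. indicator {..b} z * ps z * LL \<phi> z * u2 \<phi> z)"
    proof -
      have m2: "(\<lambda>z. indicator {..b} z * u2 \<phi> z) \<in> borel_measurable borel" by measurable
      have "integrable M (\<lambda>z. ((indicator {..b} z * u2 \<phi> z) * (indicator {..b} z * LL \<phi> z)) * ps z)"
        by (rule sq_prod[OF sq_bmult[OF SL m2 b2] sq_ps])
      then show ?thesis by (rule int_eq) (auto simp: indicator_def)
    qed
    have "(LINT z|M. (indicator {..b} z * LL \<phi> z) * (indicator {..b} z * (u1 \<phi> z + u2 \<phi> z * ps z)))
       = (LINT z|M. indicator {..b} z * LL \<phi> z * u1 \<phi> z + indicator {..b} z * ps z * LL \<phi> z * u2 \<phi> z)"
      by (intro Bochner_Integration.integral_cong) (auto simp: indicator_def algebra_simps)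
    also have "\<dots> = (LINT z|M. indicator {..b} z * LL \<phi> z * u1 \<phi> z) + (LINT z|M. indicator {..b} z * ps z * LL \<phi> z * u2 \<phi> z)"
      using iA iB by simp
    also have "\<dots> = QQ \<phi> b - ((LINT s|M. indicator {..b} s * G1 \<phi> s * V1f \<phi> s) + (LINT s|M. indicator {..b} s * G2 \<phi> s * V2f \<phi> s))"
      unfolding H1 H2 QQ_def by simp
    finally show ?thesis unfolding PW .
  qed
  have iLP: "integrable M (\<lambda>z. (indicator {..b} z * LL \<phi> z) * (indicator {..b} z * \<phi> z))" by (rule sq_prod[OF SL SP])
  have iLU: "integrable M (\<lambda>z. (indicator {..b} z * LL \<phi> z) * (indicator {..b} z * (u1 \<phi> z + u2 \<phi> z * ps z)))"
    by (rule sq_prod[OF SL SU])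
  have iPP: "integrable M (\<lambda>z. (indicator {..b} z * \<phi> z) * (indicator {..b} z * \<phi> z))" by (rule sq_prod[OF SP SP])
  have iPU: "integrable M (\<lambda>z. (indicator {..b} z * \<phi> z) * (indicator {..b} z * (u1 \<phi> z + u2 \<phi> z * ps z)))"
    by (rule sq_prod[OF SP SU])
  have "(LINT z|M. indicator {..b} z * (LL \<phi> z)^2)
     = (LINT z|M. (indicator {..b} z * LL \<phi> z) * (indicator {..b} z * \<phi> z)
          - (indicator {..b} z * LL \<phi> z) * (indicator {..b} z * (u1 \<phi> z + u2 \<phi> z * ps z)))"
    by (intro Bochner_Integration.integral_cong) (auto simp: indicator_def LL_def power2_eq_square algebra_simps)
  also have "\<dots> = (LINT z|M. (indicator {..b} z * LL \<phi> z) * (indicator {..b} z * \<phi> z))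
          - (LINT z|M. (indicator {..b} z * LL \<phi> z) * (indicator {..b} z * (u1 \<phi> z + u2 \<phi> z * ps z)))"
    using iLP iLU by simp
  also have "(LINT z|M. (indicator {..b} z * LL \<phi> z) * (indicator {..b} z * \<phi> z))
     = (LINT z|M. (indicator {..b} z * \<phi> z) * (indicator {..b} z * \<phi> z)
          - (indicator {..b} z * \<phi> z) * (indicator {..b} z * (u1 \<phi> z + u2 \<phi> z * ps z)))"
    by (intro Bochner_Integration.integral_cong) (auto simp: indicator_def LL_def algebra_simps)
  also have "\<dots> = (LINT z|M. (indicator {..b} z * \<phi> z) * (indicator {..b} z * \<phi> z))
          - (LINT z|M. (indicator {..b} z * \<phi> z) * (indicator {..b} z * (u1 \<phi> z + u2 \<phi> z * ps z)))"
    using iPP iPU by simp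
  also have "(LINT z|M. (indicator {..b} z * \<phi> z) * (indicator {..b} z * \<phi> z)) = (LINT z|M. indicator {..b} z * (\<phi> z)^2)"
    by (intro Bochner_Integration.integral_cong) (auto simp: indicator_def power2_eq_square)
  finally show ?thesis unfolding X by simp
qed

end

definition qf :: "real \<Rightarrow> real \<Rightarrow> real \<Rightarrow> real \<Rightarrow> real \<Rightarrow> real" where
  "qf a c d x y = a * x^2 + 2 * c * x * y + d * y^2"

lemma qf_nonneg:
  assumes "0 \<le> a" "0 \<le> d" "c^2 \<le> a * d"
  shows "0 \<le> qf a c d x y"
proof (cases "a = 0")
  case True
  then have "c = 0" using assms by simp
  then show ?thesis using True assms by (simp add: qf_def)
next
  case False
  then have a: "0 < a" using assms by simp
  have "a * qf a c d x y = (a*x + c*y)^2 + (a*d - c^2) * y^2"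
    by (simp add: qf_def power2_eq_square algebra_simps)
  also have "\<dots> \<ge> 0" using assms by simp
  finally show ?thesis using a by (simp add: zero_le_mult_iff)
qed

lemma qf_add:
  assumes "0 \<le> a" "0 \<le> d" "c^2 \<le> a * d"
  shows "qf a c d (x + x') (y + y') \<le> 2 * qf a c d x y + 2 * qf a c d x' y'"
proof -
  have "2 * qf a c d x y + 2 * qf a c d x' y' - qf a c d (x + x') (y + y') = qf a c d (x - x') (y - y')"
    by (simp add: qf_def power2_eq_square algebra_simps)
  then show ?thesis using qf_nonneg[OF assms, of "x - x'" "y - y'"] by simp
qed

lemma qf_V1: "(a * x + c * y)^2 \<le> a * qf a c d x y" if "c^2 \<le> a * d"
proof -
  have "a * qf a c d x y - (a * x + c * y)^2 = (a * d - c^2) * y^2"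
    by (simp add: qf_def power2_eq_square algebra_simps)
  then show ?thesis using that by (smt (verit) zero_le_power2 mult_nonneg_nonneg)
qed

lemma qf_V2: "(c * x + d * y)^2 \<le> d * qf a c d x y" if "c^2 \<le> a * d"
proof -
  have "d * qf a c d x y - (c * x + d * y)^2 = (a * d - c^2) * x^2"
    by (simp add: qf_def power2_eq_square algebra_simps)
  then show ?thesis using that by (smt (verit) zero_le_power2 mult_nonneg_nonneg)
qed

context khm begin

declare aa_m[measurable] cc_m[measurable] dd_m[measurable] DD_m[measurable] ps_meas[measurable] UU_borel[measurable]

lemma QQ_qf: "QQ \<phi> c = qf (aa c) (cc c) (dd c) (u1 \<phi> c) (u2 \<phi> c)"
  by (simp add: QQ_def V1f_def V2f_def qf_def power2_eq_square algebra_simps)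

lemma QQ_nonneg: "0 \<le> QQ \<phi> c"
  unfolding QQ_qf by (rule qf_nonneg) (auto simp: aa_nonneg dd_nonneg CS_tail)

lemma QQ_le: "sq \<phi> \<Longrightarrow> c \<in> UU \<Longrightarrow> QQ \<phi> c \<le> (LINT z|M. indicator {..c} z * (\<phi> z)^2)"
proof -
  assume a: "sq \<phi>" "c \<in> UU"
  have "0 \<le> (LINT z|M. indicator {..c} z * (LL \<phi> z)^2)" by (intro integral_nonneg_AE) auto
  then show ?thesis using K2[OF a] by simp
qed

lemma ev_le:
  assumes "strict_mono b" "AE x in M. \<exists>n. x < b n"
  shows "AE x in M. eventually (\<lambda>n. x < b n) sequentially"
  using assms(2)
proof eventually_elim
  fix x assume "\<exists>n. x < b n"
  then obtain n where n: "x < b n" by blast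
  have "\<forall>m\<ge>n. x < b m"
  proof (intro allI impI)
    fix m assume "n \<le> m"
    then have "b n \<le> b m" using strict_mono_mono[OF assms(1)] by (simp add: monoD)
    then show "x < b m" using n by simp
  qed
  then show "eventually (\<lambda>n. x < b n) sequentially" by (auto simp: eventually_sequentially)
qed

lemma int_head_lim:
  fixes g :: "real \<Rightarrow> real"
  assumes b: "strict_mono b" "AE x in M. \<exists>n. x < b n" and g: "integrable M g"
  shows "(\<lambda>n. LINT x|M. indicator {..b n} x * g x) \<longlonglongrightarrow> (LINT x|M. g x)"
proof (rule integral_dominated_convergence[where w="\<lambda>x. \<bar>g x\<bar>"])
  show "AE x in M. (\<lambda>n. indicator {..b n} x * g x) \<longlonglongrightarrow> g x"
    using ev_le[OF b]
  proof eventually_elim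
    fix x assume "eventually (\<lambda>n. x < b n) sequentially"
    then have "eventually (\<lambda>n. indicator {..b n} x * g x = g x) sequentially"
      by eventually_elim (auto simp: indicator_def)
    then show "(\<lambda>n. indicator {..b n} x * g x) \<longlonglongrightarrow> g x" by (rule tendsto_eventually)
  qed
  show "AE x in M. norm (indicator {..b n} x * g x) \<le> \<bar>g x\<bar>" for n
    by (intro AE_I2) (auto simp: indicator_def)
qed (use g borel_measurable_integrable[OF g] in auto)

lemma int_tail_lim:
  fixes g :: "real \<Rightarrow> real"
  assumes b: "strict_mono b" "AE x in M. \<exists>n. x < b n" and g: "integrable M g"
  shows "(\<lambda>n. LINT x|M. indicator {b n..} x * g x) \<longlonglongrightarrow> 0"
proof -
  have "(\<lambda>n. LINT x|M. indicator {b n..} x * g x) \<longlonglongrightarrow> (LINT x|M. 0)"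
  proof (rule integral_dominated_convergence[where w="\<lambda>x. \<bar>g x\<bar>"])
    show "AE x in M. (\<lambda>n. indicator {b n..} x * g x) \<longlonglongrightarrow> 0"
      using ev_le[OF b]
    proof eventually_elim
      fix x assume "eventually (\<lambda>n. x < b n) sequentially"
      then have "eventually (\<lambda>n. indicator {b n..} x * g x = 0) sequentially"
        by eventually_elim (auto simp: indicator_def)
      then show "(\<lambda>n. indicator {b n..} x * g x) \<longlonglongrightarrow> 0" by (rule tendsto_eventually)
    qed
    show "AE x in M. norm (indicator {b n..} x * g x) \<le> \<bar>g x\<bar>" for n
      by (intro AE_I2) (auto simp: indicator_def)
  qed (use g borel_measurable_integrable[OF g] in auto)
  then show ?thesis by simp
qed

lemma tail_strict_eq:
  fixes g :: "real \<Rightarrow> real"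
  assumes "integrable M g"
  shows "(LINT x|M. indicator {c<..} x * g x) = (LINT x|M. indicator {c..} x * g x)"
  using borel_measurable_integrable[OF assms]
  by (intro integral_cong_AE) (auto intro!: eventually_mono[OF point_AE[of c]] simp: indicator_def)

lemma abc_lim:
  assumes b: "strict_mono b" "AE x in M. \<exists>n. x < b n"
  shows "(\<lambda>n. aa (b n)) \<longlonglongrightarrow> 0" "(\<lambda>n. cc (b n)) \<longlonglongrightarrow> 0" "(\<lambda>n. dd (b n)) \<longlonglongrightarrow> 0"
  unfolding aa_def cc_def dd_def
  by (rule int_tail_lim[OF b]; simp add: ps_int ps2_int)+

lemma sq_shift: "sq \<phi> \<Longrightarrow> sq (\<lambda>x. indicator {y0<..} x * \<phi> x)"
  by (rule sq_bmult[of _ _ 1]) auto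

lemma u_shift:
  assumes phi: "sq \<phi>" and bU: "c \<in> UU" and y0: "y0 \<le> c"
  shows "u1 (\<lambda>x. indicator {y0<..} x * \<phi> x) c = u1 \<phi> c - u1 \<phi> y0"
    and "u2 (\<lambda>x. indicator {y0<..} x * \<phi> x) c = u2 \<phi> c - u2 \<phi> y0"
proof -
  have yU: "y0 \<in> UU" using UU_down bU y0 by blast
  have "u1 (\<lambda>x. indicator {y0<..} x * \<phi> x) c = (LINT z|M. indicator {..c} z * G1 \<phi> z - indicator {..y0} z * G1 \<phi> z)"
    unfolding u1_def G1_def using y0 by (intro Bochner_Integration.integral_cong) (auto simp: indicator_def)
  also have "\<dots> = u1 \<phi> c - u1 \<phi> y0"
    unfolding u1_def using G1_int[OF phi bU] G1_int[OF phi yU] by simp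
  finally show "u1 (\<lambda>x. indicator {y0<..} x * \<phi> x) c = u1 \<phi> c - u1 \<phi> y0" .
  have "u2 (\<lambda>x. indicator {y0<..} x * \<phi> x) c = (LINT z|M. indicator {..c} z * G2 \<phi> z - indicator {..y0} z * G2 \<phi> z)"
    unfolding u2_def G2_def using y0 by (intro Bochner_Integration.integral_cong) (auto simp: indicator_def)
  also have "\<dots> = u2 \<phi> c - u2 \<phi> y0"
    unfolding u2_def using G2_int[OF phi bU] G2_int[OF phi yU] by simp
  finally show "u2 (\<lambda>x. indicator {y0<..} x * \<phi> x) c = u2 \<phi> c - u2 \<phi> y0" .
qed

lemma QQ_lim:
  assumes b: "strict_mono b" "\<forall>n. b n \<in> UU" "AE x in M. \<exists>n. x < b n" and phi: "sq \<phi>"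
  shows "(\<lambda>n. QQ \<phi> (b n)) \<longlonglongrightarrow> 0"
proof (rule order_tendstoI)
  fix a :: real assume "a < 0"
  show "eventually (\<lambda>n. a < QQ \<phi> (b n)) sequentially"
  proof (rule always_eventually, intro allI)
    fix n show "a < QQ \<phi> (b n)" using \<open>a < 0\<close> QQ_nonneg[of \<phi> "b n"] by linarith
  qed
next
  fix \<epsilon> :: real assume e: "0 < \<epsilon>"
  have "(\<lambda>n. LINT x|M. indicator {b n..} x * (\<phi> x)^2) \<longlonglongrightarrow> 0"
    by (rule int_tail_lim[OF b(1) b(3) sq_sq[OF phi]])
  then have "eventually (\<lambda>n. (LINT x|M. indicator {b n..} x * (\<phi> x)^2) < \<epsilon>/4) sequentially"
    using e by (intro order_tendstoD) auto
  then obtain N0 where N0: "(LINT x|M. indicator {b N0..} x * (\<phi> x)^2) < \<epsilon>/4"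
    by (auto simp: eventually_sequentially)
  define y0 where "y0 = b N0"
  define \<phi>' where "\<phi>' = (\<lambda>x. indicator {y0<..} x * \<phi> x)"
  have phi': "sq \<phi>'" unfolding \<phi>'_def by (rule sq_shift[OF phi])
  define w1 where "w1 = u1 \<phi> y0"
  define w2 where "w2 = u2 \<phi> y0"
  have ql: "(\<lambda>n. qf (aa (b n)) (cc (b n)) (dd (b n)) w1 w2) \<longlonglongrightarrow> qf 0 0 0 w1 w2"
    unfolding qf_def using abc_lim[OF b(1) b(3)] by (intro tendsto_intros) auto
  then have "eventually (\<lambda>n. qf (aa (b n)) (cc (b n)) (dd (b n)) w1 w2 < \<epsilon>/4) sequentially"
    using e by (intro order_tendstoD) (auto simp: qf_def)
  moreover have "eventually (\<lambda>n. N0 \<le> n) sequentially" by (auto simp: eventually_sequentially)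
  ultimately show "eventually (\<lambda>n. QQ \<phi> (b n) < \<epsilon>) sequentially"
  proof eventually_elim
    case (elim n)
    have y0n: "y0 \<le> b n" unfolding y0_def using elim(2) strict_mono_mono[OF b(1)] by (simp add: monoD)
    have bU: "b n \<in> UU" using b(2) by simp
    have abc: "0 \<le> aa (b n)" "0 \<le> dd (b n)" "(cc (b n))^2 \<le> aa (b n) * dd (b n)"
      by (auto simp: aa_nonneg dd_nonneg CS_tail)
    have "QQ \<phi> (b n) = qf (aa (b n)) (cc (b n)) (dd (b n)) ((u1 \<phi> (b n) - w1) + w1) ((u2 \<phi> (b n) - w2) + w2)"
      unfolding QQ_qf by simp
    also have "\<dots> \<le> 2 * qf (aa (b n)) (cc (b n)) (dd (b n)) (u1 \<phi> (b n) - w1) (u2 \<phi> (b n) - w2)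
         + 2 * qf (aa (b n)) (cc (b n)) (dd (b n)) w1 w2"
      by (rule qf_add[OF abc])
    also have "qf (aa (b n)) (cc (b n)) (dd (b n)) (u1 \<phi> (b n) - w1) (u2 \<phi> (b n) - w2) = QQ \<phi>' (b n)"
      unfolding QQ_qf \<phi>'_def w1_def w2_def u_shift[OF phi bU y0n] ..
    also have "QQ \<phi>' (b n) \<le> (LINT z|M. indicator {..b n} z * (\<phi>' z)^2)"
      by (rule QQ_le[OF phi' bU])
    also have "\<dots> \<le> (LINT z|M. indicator {y0..} z * (\<phi> z)^2)"
    proof (rule integral_mono)
      show "integrable M (\<lambda>z. indicator {..b n} z * (\<phi>' z)^2)" using sq_sq[OF sq_indb[OF phi']]
        by (rule int_eq) (auto simp: indicator_def)
      show "integrable M (\<lambda>z. indicator {y0..} z * (\<phi> z)^2)" by (rule ind_int[OF sq_sq[OF phi]]) auto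
    qed (auto simp: \<phi>'_def indicator_def)
    finally have "QQ \<phi> (b n) \<le> 2 * (LINT z|M. indicator {y0..} z * (\<phi> z)^2) + 2 * qf (aa (b n)) (cc (b n)) (dd (b n)) w1 w2"
      by simp
    then show ?case using N0 elim(1) unfolding y0_def by simp
  qed
qed

end

context khm begin

declare aa_m[measurable] cc_m[measurable] dd_m[measurable] DD_m[measurable] ps_meas[measurable] UU_borel[measurable]

lemma main1:
  assumes phi: "sq \<phi>"
  shows "integrable M (\<lambda>y. (LL \<phi> y)^2)" "(LINT y|M. (LL \<phi> y)^2) = (LINT y|M. (\<phi> y)^2)"
    "(LINT y|M. LL \<phi> y) = 0" "(LINT y|M. ps y * LL \<phi> y) = 0"
proof -
  from seq_exists obtain b :: "nat \<Rightarrow> real" where bb: "strict_mono b \<and> (\<forall>n. b n \<in> UU) \<and> (AE x in M. \<exists>n. x < b n)" ..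
  have b1: "strict_mono b" using bb by (rule conjunct1)
  have b2: "\<forall>n. b n \<in> UU" using bb by (rule conjunct1[OF conjunct2])
  have b3: "AE x in M. \<exists>n. x < b n" using bb by (rule conjunct2[OF conjunct2])
  have bmono: "b m \<le> b n" if "m \<le> n" for m n using strict_mono_mono[OF b1] that by (simp add: monoD)
  have LLm: "LL \<phi> \<in> borel_measurable borel" using LL_m[OF sq_meas[OF phi]] .
  have fint: "integrable M (\<lambda>x. indicator {..b n} x * (LL \<phi> x)^2)" for n
  proof -
    have "b n \<in> UU" using b2 by blast
    from sq_sq[OF sq_SL[OF phi this]] show ?thesis
      by (rule int_eq) (simp add: indicator_def power2_eq_square)
  qed
  have ilim: "(\<lambda>n. LINT x|M. indicator {..b n} x * (LL \<phi> x)^2) \<longlonglongrightarrow> (LINT x|M. (\<phi> x)^2) - 0"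
  proof -
    have "(\<lambda>n. (LINT x|M. indicator {..b n} x * (\<phi> x)^2) - QQ \<phi> (b n)) \<longlonglongrightarrow> (LINT x|M. (\<phi> x)^2) - 0"
      by (intro tendsto_diff int_head_lim[OF b1 b3 sq_sq[OF phi]] QQ_lim[OF b1 b2 b3 phi])
    moreover have "(LINT x|M. indicator {..b n} x * (LL \<phi> x)^2) = (LINT x|M. indicator {..b n} x * (\<phi> x)^2) - QQ \<phi> (b n)" for n
      using K2[OF phi] b2 by simp
    ultimately show ?thesis by simp
  qed
  have mono: "AE x in M. mono (\<lambda>n. indicator {..b n} x * (LL \<phi> x)^2)"
  proof (intro AE_I2 monoI)
    fix x and m n :: nat assume "m \<le> n"
    then have "b m \<le> b n" by (rule bmono)
    then show "indicator {..b m} x * (LL \<phi> x)^2 \<le> indicator {..b n} x * (LL \<phi> x)^2"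
      by (auto simp: indicator_def)
  qed
  have lim: "AE x in M. (\<lambda>n. indicator {..b n} x * (LL \<phi> x)^2) \<longlonglongrightarrow> (LL \<phi> x)^2"
    using ev_le[OF b1 b3]
  proof eventually_elim
    fix x assume "eventually (\<lambda>n. x < b n) sequentially"
    then have "eventually (\<lambda>n. indicator {..b n} x * (LL \<phi> x)^2 = (LL \<phi> x)^2) sequentially"
      by eventually_elim (auto simp: indicator_def)
    then show "(\<lambda>n. indicator {..b n} x * (LL \<phi> x)^2) \<longlonglongrightarrow> (LL \<phi> x)^2" by (rule tendsto_eventually)
  qed
  have um: "(\<lambda>x. (LL \<phi> x)^2) \<in> borel_measurable M" using LLm by simp
  show int2: "integrable M (\<lambda>y. (LL \<phi> y)^2)"
    by (rule integrable_monotone_convergence[OF fint mono lim ilim um])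
  have "(LINT y|M. (LL \<phi> y)^2) = (LINT x|M. (\<phi> x)^2) - 0"
    by (rule integral_monotone_convergence[OF fint mono lim ilim um])
  then show "(LINT y|M. (LL \<phi> y)^2) = (LINT y|M. (\<phi> y)^2)" by simp
  have sqL: "sq (LL \<phi>)" unfolding sq_def using LLm int2 by simp
  have QQl: "(\<lambda>n. QQ \<phi> (b n)) \<longlonglongrightarrow> 0" by (rule QQ_lim[OF b1 b2 b3 phi])
  have V1l: "(\<lambda>n. V1f \<phi> (b n)) \<longlonglongrightarrow> 0"
  proof (rule Lim_null_comparison)
    show "(\<lambda>n. sqrt (QQ \<phi> (b n))) \<longlonglongrightarrow> 0" using tendsto_real_sqrt[OF QQl] by simp
    show "eventually (\<lambda>n. norm (V1f \<phi> (b n)) \<le> sqrt (QQ \<phi> (b n))) sequentially"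
    proof (rule always_eventually, intro allI)
      fix n
      have "(V1f \<phi> (b n))^2 \<le> aa (b n) * QQ \<phi> (b n)"
        unfolding V1f_def QQ_qf by (rule qf_V1) (rule CS_tail)
      also have "\<dots> \<le> 1 * QQ \<phi> (b n)" by (intro mult_right_mono aa_le1 QQ_nonneg)
      finally have "(V1f \<phi> (b n))^2 \<le> QQ \<phi> (b n)" by simp
      then show "norm (V1f \<phi> (b n)) \<le> sqrt (QQ \<phi> (b n))" by (simp add: real_le_rsqrt)
    qed
  qed
  have V2l: "(\<lambda>n. V2f \<phi> (b n)) \<longlonglongrightarrow> 0"
  proof (rule Lim_null_comparison)
    show "(\<lambda>n. sqrt (K2c * QQ \<phi> (b n))) \<longlonglongrightarrow> 0" using tendsto_real_sqrt[OF tendsto_mult_right_zero[OF QQl, of K2c]] by simp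
    show "eventually (\<lambda>n. norm (V2f \<phi> (b n)) \<le> sqrt (K2c * QQ \<phi> (b n))) sequentially"
    proof (rule always_eventually, intro allI)
      fix n
      have "(V2f \<phi> (b n))^2 \<le> dd (b n) * QQ \<phi> (b n)"
        unfolding V2f_def QQ_qf by (rule qf_V2) (rule CS_tail)
      also have "\<dots> \<le> K2c * QQ \<phi> (b n)" unfolding K2c_def by (intro mult_right_mono dd_le QQ_nonneg)
      finally show "norm (V2f \<phi> (b n)) \<le> sqrt (K2c * QQ \<phi> (b n))" by (simp add: real_le_rsqrt)
    qed
  qed
  have l1: "(\<lambda>n. LINT x|M. indicator {..b n} x * LL \<phi> x) \<longlonglongrightarrow> (LINT x|M. LL \<phi> x)"
    by (rule int_head_lim[OF b1 b3 sq_int[OF sqL]])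
  have e1: "(\<lambda>n. LINT x|M. indicator {..b n} x * LL \<phi> x) = (\<lambda>n. V1f \<phi> (b n))"
  proof
    fix n show "(LINT x|M. indicator {..b n} x * LL \<phi> x) = V1f \<phi> (b n)"
      unfolding V1f_def using K1(1)[OF phi] b2 by simp
  qed
  show "(LINT y|M. LL \<phi> y) = 0" using l1[unfolded e1] V1l by (rule LIMSEQ_unique)
  have l2: "(\<lambda>n. LINT x|M. indicator {..b n} x * (ps x * LL \<phi> x)) \<longlonglongrightarrow> (LINT x|M. ps x * LL \<phi> x)"
    by (rule int_head_lim[OF b1 b3 sq_prod[OF sq_ps sqL]])
  have e2: "(\<lambda>n. LINT x|M. indicator {..b n} x * (ps x * LL \<phi> x)) = (\<lambda>n. V2f \<phi> (b n))"
  proof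
    fix n show "(LINT x|M. indicator {..b n} x * (ps x * LL \<phi> x)) = V2f \<phi> (b n)"
      unfolding V2f_def using K1(2)[OF phi] b2 by (simp add: mult.assoc)
  qed
  show "(LINT y|M. ps y * LL \<phi> y) = 0" using l2[unfolded e2] V2l by (rule LIMSEQ_unique)
qed

end

context khm begin

declare aa_m[measurable] cc_m[measurable] dd_m[measurable] DD_m[measurable] ps_meas[measurable] UU_borel[measurable]

lemma L2set_sq: "\<phi> \<in> L2set M \<longleftrightarrow> sq \<phi>"
  unfolding L2set_def sq_def by simp

lemma part1:
  assumes phi: "sq \<phi>"
  shows "Lop f f' \<phi> \<in> L2set M"
    "integrable M (\<lambda>y. Lop f f' \<phi> y *\<^sub>R hvec f f' y)"
    "(LINT y|M. Lop f f' \<phi> y *\<^sub>R hvec f f' y) = 0"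
    "(LINT y|M. (Lop f f' \<phi> y)^2) = (LINT y|M. (\<phi> y)^2)"
proof -
  note [measurable] = Lop_m[OF sq_meas[OF phi]] LL_m[OF sq_meas[OF phi]] sq_meas[OF phi]
  have ae: "AE y in M. Lop f f' \<phi> y = LL \<phi> y" by (rule Lop_LL_AE[OF phi])
  have i2: "integrable M (\<lambda>y. (Lop f f' \<phi> y)^2)"
    using main1(1)[OF phi] ae by (subst integrable_cong_AE[where g="\<lambda>y. (LL \<phi> y)^2"]) (auto elim!: eventually_mono)
  then show "Lop f f' \<phi> \<in> L2set M" unfolding L2set_def by simp
  have sqL: "sq (LL \<phi>)" unfolding sq_def using main1(1)[OF phi] by simp
  have ae2: "AE y in M. Lop f f' \<phi> y *\<^sub>R hvec f f' y = LL \<phi> y *\<^sub>R V1 + (ps y * LL \<phi> y) *\<^sub>R V2"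
    using ae by eventually_elim (simp add: hvec_eq algebra_simps scaleR_add_right)
  have iv: "integrable M (\<lambda>y. LL \<phi> y *\<^sub>R V1 + (ps y * LL \<phi> y) *\<^sub>R V2)"
    using sq_int[OF sqL] sq_prod[OF sq_ps sqL] by simp
  have "(\<lambda>y. Lop f f' \<phi> y *\<^sub>R hvec f f' y) \<in> borel_measurable borel"
    unfolding hvec_eq by measurable
  then have m1: "(\<lambda>y. Lop f f' \<phi> y *\<^sub>R hvec f f' y) \<in> borel_measurable M" by simp
  have "(\<lambda>y. LL \<phi> y *\<^sub>R V1 + (ps y * LL \<phi> y) *\<^sub>R V2) \<in> borel_measurable borel" by measurable
  then have m2: "(\<lambda>y. LL \<phi> y *\<^sub>R V1 + (ps y * LL \<phi> y) *\<^sub>R V2) \<in> borel_measurable M" by simp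
  show "integrable M (\<lambda>y. Lop f f' \<phi> y *\<^sub>R hvec f f' y)"
    using iv integrable_cong_AE[OF m1 m2 ae2] by simp
  have "(LINT y|M. Lop f f' \<phi> y *\<^sub>R hvec f f' y) = (LINT y|M. LL \<phi> y *\<^sub>R V1 + (ps y * LL \<phi> y) *\<^sub>R V2)"
    by (rule integral_cong_AE[OF m1 m2 ae2])
  also have "\<dots> = (LINT y|M. LL \<phi> y) *\<^sub>R V1 + (LINT y|M. ps y * LL \<phi> y) *\<^sub>R V2"
    using sq_int[OF sqL] sq_prod[OF sq_ps sqL] by simp
  also have "\<dots> = 0" using main1(3,4)[OF phi] by simp
  finally show "(LINT y|M. Lop f f' \<phi> y *\<^sub>R hvec f f' y) = 0" .
  have "(LINT y|M. (Lop f f' \<phi> y)^2) = (LINT y|M. (LL \<phi> y)^2)"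
    using ae by (intro integral_cong_AE) (auto elim!: eventually_mono)
  then show "(LINT y|M. (Lop f f' \<phi> y)^2) = (LINT y|M. (\<phi> y)^2)" using main1(2)[OF phi] by simp
qed

lemma G1_add: "G1 (\<lambda>x. \<phi>1 x + \<phi>2 x) z = G1 \<phi>1 z + G1 \<phi>2 z"
  unfolding G1_def by (simp only: distrib_right add_divide_distrib)
lemma G2_add: "G2 (\<lambda>x. \<phi>1 x + \<phi>2 x) z = G2 \<phi>1 z + G2 \<phi>2 z"
  unfolding G2_def by (simp only: distrib_right add_divide_distrib)

lemma LL_add:
  assumes "sq \<phi>1" "sq \<phi>2" "y \<in> UU"
  shows "LL (\<lambda>x. \<phi>1 x + \<phi>2 x) y = LL \<phi>1 y + LL \<phi>2 y"
proof -
  have "u1 (\<lambda>x. \<phi>1 x + \<phi>2 x) y = u1 \<phi>1 y + u1 \<phi>2 y"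
  proof -
    have "u1 (\<lambda>x. \<phi>1 x + \<phi>2 x) y = (LINT z|M. indicator {..y} z * G1 \<phi>1 z + indicator {..y} z * G1 \<phi>2 z)"
      unfolding u1_def by (intro Bochner_Integration.integral_cong) (simp_all only: G1_add distrib_left)
    then show ?thesis unfolding u1_def using G1_int[OF assms(1,3)] G1_int[OF assms(2,3)] by simp
  qed
  moreover have "u2 (\<lambda>x. \<phi>1 x + \<phi>2 x) y = u2 \<phi>1 y + u2 \<phi>2 y"
  proof -
    have "u2 (\<lambda>x. \<phi>1 x + \<phi>2 x) y = (LINT z|M. indicator {..y} z * G2 \<phi>1 z + indicator {..y} z * G2 \<phi>2 z)"
      unfolding u2_def by (intro Bochner_Integration.integral_cong) (simp_all only: G2_add distrib_left)
    then show ?thesis unfolding u2_def using G2_int[OF assms(2,3)] G2_int[OF assms(1,3)] by simp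
  qed
  ultimately show ?thesis unfolding LL_def by (simp add: algebra_simps)
qed

lemma Lop_ip:
  assumes p1: "sq \<phi>1" and p2: "sq \<phi>2"
  shows "(LINT y|M. Lop f f' \<phi>1 y * Lop f f' \<phi>2 y) = (LINT y|M. \<phi>1 y * \<phi>2 y)"
proof -
  have p12: "sq (\<lambda>x. \<phi>1 x + \<phi>2 x)" by (rule sq_add[OF p1 p2])
  note [measurable] = Lop_m[OF sq_meas[OF p1]] Lop_m[OF sq_meas[OF p2]] LL_m[OF sq_meas[OF p1]]
    LL_m[OF sq_meas[OF p2]] LL_m[OF sq_meas[OF p12]] sq_meas[OF p1] sq_meas[OF p2]
  have sL1: "sq (LL \<phi>1)" unfolding sq_def using main1(1)[OF p1] by simp
  have sL2: "sq (LL \<phi>2)" unfolding sq_def using main1(1)[OF p2] by simp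
  have "(LINT y|M. Lop f f' \<phi>1 y * Lop f f' \<phi>2 y) = (LINT y|M. LL \<phi>1 y * LL \<phi>2 y)"
  proof -
    have "AE y in M. Lop f f' \<phi>1 y * Lop f f' \<phi>2 y = LL \<phi>1 y * LL \<phi>2 y"
      using Lop_LL_AE[OF p1] Lop_LL_AE[OF p2] by eventually_elim simp
    then show ?thesis by (intro integral_cong_AE) auto
  qed
  also have "(LINT y|M. LL \<phi>1 y * LL \<phi>2 y) = (LINT y|M. \<phi>1 y * \<phi>2 y)"
  proof -
    have "(LINT y|M. (LL (\<lambda>x. \<phi>1 x + \<phi>2 x) y)^2) = (LINT y|M. (LL \<phi>1 y)^2 + 2 * (LL \<phi>1 y * LL \<phi>2 y) + (LL \<phi>2 y)^2)"
      using AE_UU by (intro integral_cong_AE) (auto elim!: eventually_mono simp: LL_add[OF p1 p2] power2_sum)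
    also have "\<dots> = (LINT y|M. (LL \<phi>1 y)^2) + 2 * (LINT y|M. LL \<phi>1 y * LL \<phi>2 y) + (LINT y|M. (LL \<phi>2 y)^2)"
      using sq_sq[OF sL1] sq_sq[OF sL2] sq_prod[OF sL1 sL2] by simp
    finally have A: "(LINT y|M. (LL (\<lambda>x. \<phi>1 x + \<phi>2 x) y)^2) = (LINT y|M. (LL \<phi>1 y)^2) + 2 * (LINT y|M. LL \<phi>1 y * LL \<phi>2 y) + (LINT y|M. (LL \<phi>2 y)^2)" .
    have "(LINT y|M. (\<phi>1 y + \<phi>2 y)^2) = (LINT y|M. (\<phi>1 y)^2 + 2 * (\<phi>1 y * \<phi>2 y) + (\<phi>2 y)^2)"
      by (rule Bochner_Integration.integral_cong[OF refl]) (simp add: power2_eq_square algebra_simps)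
    also have "\<dots> = (LINT y|M. (\<phi>1 y)^2) + 2 * (LINT y|M. \<phi>1 y * \<phi>2 y) + (LINT y|M. (\<phi>2 y)^2)"
      using sq_sq[OF p1] sq_sq[OF p2] sq_prod[OF p1 p2] by simp
    finally have B: "(LINT y|M. (\<phi>1 y + \<phi>2 y)^2) = (LINT y|M. (\<phi>1 y)^2) + 2 * (LINT y|M. \<phi>1 y * \<phi>2 y) + (LINT y|M. (\<phi>2 y)^2)" .
    show ?thesis using A B main1(2)[OF p1] main1(2)[OF p2] main1(2)[OF p12] by simp
  qed
  finally show ?thesis .
qed

end

lemma fin_sq_int:
  fixes g :: "'a \<Rightarrow> real"
  assumes "finite_measure N" "g \<in> borel_measurable N" "integrable N (\<lambda>x. (g x)^2)"
  shows "integrable N g"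
proof (rule Bochner_Integration.integrable_bound[where f="\<lambda>y. 1 + (g y)^2"])
  interpret finite_measure N by fact
  show "integrable N (\<lambda>y. 1 + (g y)^2)" using assms by simp
  show "AE x in N. norm (g x) \<le> norm (1 + (g x)^2)"
  proof (intro AE_I2)
    fix x have "\<bar>g x\<bar> \<le> 1 + (g x)^2"
    proof (cases "\<bar>g x\<bar> \<le> 1")
      case False
      then have "\<bar>g x\<bar> * 1 \<le> \<bar>g x\<bar> * \<bar>g x\<bar>" by (intro mult_left_mono) auto
      then show ?thesis by (simp add: power2_eq_square abs_mult_self)
    qed (simp add: add_increasing2)
    then show "norm (g x) \<le> norm (1 + (g x)^2)" by simp
  qed
qed (use assms in simp)

lemma gen_prod_int:
  fixes g k :: "'a \<Rightarrow> real"
  assumes g: "g \<in> borel_measurable N" and g2: "integrable N (\<lambda>y. (g y)^2)"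
    and k: "k \<in> borel_measurable N" and k2: "integrable N (\<lambda>y. (k y)^2)"
  shows "integrable N (\<lambda>y. g y * k y)"
proof (rule Bochner_Integration.integrable_bound[where f="\<lambda>y. (g y)^2 + (k y)^2"])
  show "integrable N (\<lambda>y. (g y)^2 + (k y)^2)" using g2 k2 by simp
  show "AE x in N. norm (g x * k x) \<le> norm ((g x)^2 + (k x)^2)"
  proof (intro AE_I2)
    fix x
    have "0 \<le> (\<bar>g x\<bar> - \<bar>k x\<bar>)^2" by simp
    then have "2 * (\<bar>g x\<bar> * \<bar>k x\<bar>) \<le> (g x)^2 + (k x)^2"
      by (simp add: power2_eq_square algebra_simps abs_mult_self)
    moreover have "0 \<le> \<bar>g x\<bar> * \<bar>k x\<bar>" by simp
    ultimately have "\<bar>g x\<bar> * \<bar>k x\<bar> \<le> (g x)^2 + (k x)^2" by linarith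
    moreover have "0 \<le> (g x)^2 + (k x)^2" by simp
    ultimately show "norm (g x * k x) \<le> norm ((g x)^2 + (k x)^2)"
      by (simp add: abs_mult)
  qed
qed (use g k in simp)

lemma prod2:
  fixes g :: "'a \<Rightarrow> real" and k :: "'b \<Rightarrow> real"
  assumes M1: "prob_space M1" and M2: "prob_space M2" and g: "integrable M1 g" and k: "integrable M2 k"
  shows "integrable (M1 \<Otimes>\<^sub>M M2) (\<lambda>(x, y). g x * k y)"
    and "(\<integral>p. (case p of (x, y) \<Rightarrow> g x * k y) \<partial>(M1 \<Otimes>\<^sub>M M2)) = (LINT x|M1. g x) * (LINT y|M2. k y)"
proof -
  interpret P1: prob_space M1 by fact
  interpret P2: prob_space M2 by fact
  interpret PP: pair_sigma_finite M1 M2 ..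
  note [measurable] = borel_measurable_integrable[OF g] borel_measurable_integrable[OF k]
  show i: "integrable (M1 \<Otimes>\<^sub>M M2) (\<lambda>(x, y). g x * k y)"
  proof (rule PP.Fubini_integrable)
    show "(\<lambda>(x, y). g x * k y) \<in> borel_measurable (M1 \<Otimes>\<^sub>M M2)" by measurable
    have "integrable M1 (\<lambda>x. \<bar>g x\<bar> * (LINT y|M2. \<bar>k y\<bar>))" using g by simp
    then show "integrable M1 (\<lambda>x. LINT y|M2. norm (case (x, y) of (x, y) \<Rightarrow> g x * k y))"
      by (simp add: abs_mult)
    show "AE x in M1. integrable M2 (\<lambda>y. case (x, y) of (x, y) \<Rightarrow> g x * k y)"
      using k by simp
  qed
  have "(\<integral>p. (case p of (x, y) \<Rightarrow> g x * k y) \<partial>(M1 \<Otimes>\<^sub>M M2)) = (LINT x|M1. LINT y|M2. g x * k y)"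
    using PP.integral_fst'[OF i] by simp
  also have "\<dots> = (LINT x|M1. g x) * (LINT y|M2. k y)" by simp
  finally show "(\<integral>p. (case p of (x, y) \<Rightarrow> g x * k y) \<partial>(M1 \<Otimes>\<^sub>M M2)) = (LINT x|M1. g x) * (LINT y|M2. k y)" .
qed

context khm begin

lemma Lop_int0:
  assumes phi: "sq \<phi>"
  shows "(LINT y|M. Lop f f' \<phi> y) = 0" "(LINT y|M. Lop f f' \<phi> y * ps y) = 0"
proof -
  note [measurable] = Lop_m[OF sq_meas[OF phi]] LL_m[OF sq_meas[OF phi]]
  have "(LINT y|M. Lop f f' \<phi> y) = (LINT y|M. LL \<phi> y)"
    using Lop_LL_AE[OF phi] by (intro integral_cong_AE) auto
  then show "(LINT y|M. Lop f f' \<phi> y) = 0" using main1(3)[OF phi] by simp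
  have "AE y in M. Lop f f' \<phi> y * ps y = ps y * LL \<phi> y"
    using Lop_LL_AE[OF phi] by eventually_elim simp
  then have "(LINT y|M. Lop f f' \<phi> y * ps y) = (LINT y|M. ps y * LL \<phi> y)"
    by (intro integral_cong_AE) auto
  then show "(LINT y|M. Lop f f' \<phi> y * ps y) = 0" using main1(4)[OF phi] by simp
qed

end


lemma ip_prod:
  fixes g1 g2 :: "'a \<Rightarrow> real" and k1 k2 :: "'b \<Rightarrow> real"
  assumes "prob_space M1" "prob_space M2" "integrable M1 (\<lambda>x. g1 x * g2 x)" "integrable M2 (\<lambda>y. k1 y * k2 y)"
  shows "ip (M1 \<Otimes>\<^sub>M M2) (\<lambda>(x, y). g1 x * k1 y) (\<lambda>(x, y). g2 x * k2 y) = (LINT x|M1. g1 x * g2 x) * (LINT y|M2. k1 y * k2 y)"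
proof -
  have "ip (M1 \<Otimes>\<^sub>M M2) (\<lambda>(x, y). g1 x * k1 y) (\<lambda>(x, y). g2 x * k2 y)
      = (\<integral>p. (case p of (x, y) \<Rightarrow> (g1 x * g2 x) * (k1 y * k2 y)) \<partial>(M1 \<Otimes>\<^sub>M M2))"
    unfolding ip_def by (intro Bochner_Integration.integral_cong) (auto simp: mult_ac)
  also have "\<dots> = (LINT x|M1. g1 x * g2 x) * (LINT y|M2. k1 y * k2 y)"
    by (rule prod2(2)[OF assms])
  finally show ?thesis .
qed

lemma vmul_zero: "(0::real^'n) v* A = 0"
  by (simp add: vector_matrix_mult_def vec_eq_iff)

theorem proposition4p1:
  fixes f f' :: "real \<Rightarrow> real"
    and H :: "'a::euclidean_space measure"
    and mu :: "'a \<Rightarrow> real^'q::finite"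
    and P :: "'w measure"
    and b :: "('a \<times> real \<Rightarrow> real) \<Rightarrow> 'w \<Rightarrow> real"
  assumes f_meas: "f \<in> borel_measurable borel"
    and f_nonneg: "\<forall>y. 0 \<le> f y"
    and f_int: "integrable lborel f"
    and f_one: "integral\<^sup>L lborel f = 1"
    and f_ac: "\<forall>a b. a \<le> b \<longrightarrow>
                 set_integrable lborel {a..b} f' \<and> (LBINT x:{a..b}. f' x) = f b - f a"
    and fisher_int: "integrable (distF f) (\<lambda>y. (psi f f' y)^2)"
    and fisher_pos: "0 < (LINT y|distF f. (psi f f' y)^2)"
    and Gam0_nonsing: "invertible (LINT z|distF f. outer (hvec f f' z))"
    and Gam_nonsing: "\<forall>y. measure (distF f) {..y} < 1 \<longrightarrow> invertible (Gam f f' y)"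
    and H_prob: "prob_space H"
    and H_sets: "sets H = sets borel"
    and mu_meas: "mu \<in> borel_measurable H"
    and mu_L2: "\<forall>j. integrable H (\<lambda>x. (mu x $ j)^2)"
    and mu_pd: "\<forall>v::real^'q. v \<noteq> 0 \<longrightarrow>
                  0 < v \<bullet> ((\<chi> i j. LINT x|H. mu x $ i * mu x $ j) *v v)"
    and P_prob: "prob_space P"
    and b_gauss: "zero_mean_gaussian P (L2set (H \<Otimes>\<^sub>M distF f)) b"
    and b_lin: "\<forall>\<alpha>\<in>L2set (H \<Otimes>\<^sub>M distF f). \<forall>\<beta>\<in>L2set (H \<Otimes>\<^sub>M distF f). \<forall>c d.
                  AE \<omega> in P. b (\<lambda>z. c * \<alpha> z + d * \<beta> z) \<omega> = c * b \<alpha> \<omega> + d * b \<beta> \<omega>"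
    and b_cov: "\<forall>\<alpha>1\<in>L2set (H \<Otimes>\<^sub>M distF f). \<forall>\<alpha>2\<in>L2set (H \<Otimes>\<^sub>M distF f).
                  (LINT \<omega>|P. b \<alpha>1 \<omega> * b \<alpha>2 \<omega>) = ip (H \<Otimes>\<^sub>M distF f) \<alpha>1 \<alpha>2"
  shows "(\<forall>\<phi>\<in>L2set (distF f).
            Lop f f' \<phi> \<in> L2set (distF f)
          \<and> integrable (distF f) (\<lambda>y. Lop f f' \<phi> y *\<^sub>R hvec f f' y)
          \<and> (LINT y|distF f. Lop f f' \<phi> y *\<^sub>R hvec f f' y) = 0
          \<and> (LINT y|distF f. (Lop f f' \<phi> y)^2) = (LINT y|distF f. (\<phi> y)^2))
       \<and> (let w = (\<lambda>(\<gamma>, \<phi>) \<omega>. xi_hat (H \<Otimes>\<^sub>M distF f) (distF f) (mfun mu (psi f f')) b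
                                  (\<lambda>(x, y). \<gamma> x * Lop f f' \<phi> y) \<omega>)
          in zero_mean_gaussian P (L2set H \<times> L2set (distF f)) w
           \<and> (\<forall>\<gamma>1\<in>L2set H. \<forall>\<phi>1\<in>L2set (distF f). \<forall>\<gamma>2\<in>L2set H. \<forall>\<phi>2\<in>L2set (distF f).
                (LINT \<omega>|P. w (\<gamma>1, \<phi>1) \<omega> * w (\<gamma>2, \<phi>2) \<omega>)
                  = ip (H \<Otimes>\<^sub>M distF f) (\<lambda>(x, y). \<gamma>1 x * \<phi>1 y) (\<lambda>(x, y). \<gamma>2 x * \<phi>2 y)))"
proof -
  interpret K: khm f f'
    by (rule khm.intro[OF f_meas f_nonneg f_int f_one f_ac fisher_int Gam_nonsing])
  have FP: "prob_space (distF f)" by (rule K.P.prob_space_axioms)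
  have HP: "prob_space H" by (rule H_prob)
  interpret PH: prob_space H by (rule H_prob)
  interpret PP: pair_sigma_finite H "distF f" ..
  have P1: "\<forall>\<phi>\<in>L2set (distF f).
            Lop f f' \<phi> \<in> L2set (distF f)
          \<and> integrable (distF f) (\<lambda>y. Lop f f' \<phi> y *\<^sub>R hvec f f' y)
          \<and> (LINT y|distF f. Lop f f' \<phi> y *\<^sub>R hvec f f' y) = 0
          \<and> (LINT y|distF f. (Lop f f' \<phi> y)^2) = (LINT y|distF f. (\<phi> y)^2)"
    using K.part1 K.L2set_sq by blast
  have Lsq: "K.sq (Lop f f' \<phi>)" if "\<phi> \<in> L2set (distF f)" for \<phi>
    using P1 that K.L2set_sq by blast
  have gH: "\<gamma> \<in> borel_measurable H" "integrable H (\<lambda>x. (\<gamma> x)^2)" if "\<gamma> \<in> L2set H" for \<gamma>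
    using that unfolding L2set_def by auto
  have aL2: "(\<lambda>(x, y). \<gamma> x * Lop f f' \<phi> y) \<in> L2set (H \<Otimes>\<^sub>M distF f)"
    if g: "\<gamma> \<in> L2set H" and p: "\<phi> \<in> L2set (distF f)" for \<gamma> \<phi>
  proof -
    have [measurable]: "\<gamma> \<in> borel_measurable H" using gH[OF g] by simp
    have "Lop f f' \<phi> \<in> borel_measurable borel" using K.sq_meas[OF Lsq[OF p]] .
    then have [measurable]: "Lop f f' \<phi> \<in> borel_measurable (distF f)" by simp
    have m: "(\<lambda>(x, y). \<gamma> x * Lop f f' \<phi> y) \<in> borel_measurable (H \<Otimes>\<^sub>M distF f)" by measurable
    have "integrable (H \<Otimes>\<^sub>M distF f) (\<lambda>(x, y). (\<gamma> x)^2 * (Lop f f' \<phi> y)^2)"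
      by (rule prod2(1)[OF HP FP gH(2)[OF g] K.sq_sq[OF Lsq[OF p]]])
    then have "integrable (H \<Otimes>\<^sub>M distF f) (\<lambda>z. ((case z of (x, y) \<Rightarrow> \<gamma> x * Lop f f' \<phi> y))^2)"
      by (rule Bochner_Integration.integrable_cong[THEN iffD1, rotated 2]) (auto simp: power_mult_distrib)
    then show ?thesis using m unfolding L2set_def by simp
  qed
  have w_eq: "xi_hat (H \<Otimes>\<^sub>M distF f) (distF f) (mfun mu (psi f f')) b (\<lambda>(x, y). \<gamma> x * Lop f f' \<phi> y) \<omega>
       = b (\<lambda>(x, y). \<gamma> x * Lop f f' \<phi> y) \<omega>"
    if g: "\<gamma> \<in> L2set H" and p: "\<phi> \<in> L2set (distF f)" for \<gamma> \<phi> \<omega>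
  proof -
    have sqp: "K.sq \<phi>" using p K.L2set_sq by blast
    have A1: "alpha1 (distF f) (\<lambda>(x, y). \<gamma> x * Lop f f' \<phi> y) = (\<lambda>(x, y). \<gamma> x * Lop f f' \<phi> y)"
      unfolding alpha1_def using K.Lop_int0(1)[OF sqp] by (auto simp: fun_eq_iff)
    have A2: "ip (H \<Otimes>\<^sub>M distF f) (\<lambda>(x, y). \<gamma> x * Lop f f' \<phi> y) (mfun mu (psi f f') j) = 0" for j
    proof -
      let ?Fn = "\<lambda>p. (case p of (x, y) \<Rightarrow> \<gamma> x * Lop f f' \<phi> y) * (case p of (x, y) \<Rightarrow> mu x $ j * psi f f' y)"
      have e: "ip (H \<Otimes>\<^sub>M distF f) (\<lambda>(x, y). \<gamma> x * Lop f f' \<phi> y) (mfun mu (psi f f') j) = integral\<^sup>L (H \<Otimes>\<^sub>M distF f) ?Fn"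
        unfolding ip_def mfun_def ..
      show ?thesis
      proof (cases "integrable (H \<Otimes>\<^sub>M distF f) ?Fn")
        case True
        have inner: "(LINT y|distF f. ?Fn (x, y)) = 0" for x
        proof -
          have "(LINT y|distF f. ?Fn (x, y)) = (LINT y|distF f. (\<gamma> x * mu x $ j) * (Lop f f' \<phi> y * psi f f' y))"
            by (intro Bochner_Integration.integral_cong) (auto simp: mult_ac)
          also have "\<dots> = 0" using K.Lop_int0(2)[OF sqp] by simp
          finally show ?thesis .
        qed
        have "integral\<^sup>L (H \<Otimes>\<^sub>M distF f) ?Fn = (LINT x|H. LINT y|distF f. ?Fn (x, y))"
          using PP.integral_fst'[OF True] by simp
        also have "\<dots> = 0" unfolding inner by simp
        finally show ?thesis unfolding e .
      next
        case False
        then show ?thesis unfolding e by (rule not_integrable_integral_eq)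
      qed
    qed
    have "((\<chi> j. ip (H \<Otimes>\<^sub>M distF f) (\<lambda>(x, y). \<gamma> x * Lop f f' \<phi> y) (mfun mu (psi f f') j)) :: real^'q) = 0"
      using A2 by (simp add: vec_eq_iff)
    then show ?thesis unfolding xi_hat_def A1 by (simp add: vmul_zero)
  qed
  have bg1: "\<forall>i\<in>L2set (H \<Otimes>\<^sub>M distF f). b i \<in> borel_measurable P"
    using b_gauss unfolding zero_mean_gaussian_def by blast
  have bg2: "\<forall>xs cs. set xs \<subseteq> L2set (H \<Otimes>\<^sub>M distF f) \<longrightarrow> length cs = length xs \<longrightarrow>
        (\<exists>v. centered_normal P (\<lambda>\<omega>. \<Sum>k<length xs. cs!k * b (xs!k) \<omega>) v)"
    using b_gauss unfolding zero_mean_gaussian_def by blast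
  define W where "W = (\<lambda>(\<gamma>, \<phi>) \<omega>. xi_hat (H \<Otimes>\<^sub>M distF f) (distF f) (mfun mu (psi f f')) b
                                  (\<lambda>(x, y). \<gamma> x * Lop f f' \<phi> y) \<omega>)"
  define A where "A = (\<lambda>(\<gamma>, \<phi>). (\<lambda>(x, y). \<gamma> x * Lop f f' \<phi> (y::real)) :: 'a \<times> real \<Rightarrow> real)"
  have WA: "W i = b (A i)" if "i \<in> L2set H \<times> L2set (distF f)" for i
    using that w_eq unfolding W_def A_def by (auto simp: fun_eq_iff)
  have AL: "A i \<in> L2set (H \<Otimes>\<^sub>M distF f)" if "i \<in> L2set H \<times> L2set (distF f)" for i
    using that aL2 unfolding A_def by auto
  have G: "zero_mean_gaussian P (L2set H \<times> L2set (distF f)) W"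
    unfolding zero_mean_gaussian_def
  proof (intro conjI ballI allI impI)
    fix i assume i: "i \<in> L2set H \<times> L2set (distF f)"
    show "W i \<in> borel_measurable P" unfolding WA[OF i] using bg1 AL[OF i] by blast
  next
    fix xs :: "(('a \<Rightarrow> real) \<times> (real \<Rightarrow> real)) list" and cs :: "real list"
    assume xs: "set xs \<subseteq> L2set H \<times> L2set (distF f)" and len: "length cs = length xs"
    define as where "as = map A xs"
    have as1: "set as \<subseteq> L2set (H \<Otimes>\<^sub>M distF f)" unfolding as_def using xs AL by auto
    have as2: "length cs = length as" unfolding as_def using len by simp
    obtain v where v: "centered_normal P (\<lambda>\<omega>. \<Sum>k<length as. cs!k * b (as!k) \<omega>) v"
      using bg2 as1 as2 by blast
    have "(\<lambda>\<omega>. \<Sum>k<length xs. cs!k * W (xs!k) \<omega>) = (\<lambda>\<omega>. \<Sum>k<length as. cs!k * b (as!k) \<omega>)"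
    proof (rule ext, rule sum.cong)
      show "{..<length xs} = {..<length as}" unfolding as_def by simp
    next
      fix \<omega> k assume "k \<in> {..<length as}"
      then have k: "k < length xs" unfolding as_def by simp
      then have "xs!k \<in> L2set H \<times> L2set (distF f)" using xs nth_mem by blast
      then show "cs!k * W (xs!k) \<omega> = cs!k * b (as!k) \<omega>" unfolding as_def using WA k by simp
    qed
    then show "\<exists>v. centered_normal P (\<lambda>\<omega>. \<Sum>k<length xs. cs!k * W (xs!k) \<omega>) v" using v by auto
  qed
  have C: "(LINT \<omega>|P. W (\<gamma>1, \<phi>1) \<omega> * W (\<gamma>2, \<phi>2) \<omega>)
              = ip (H \<Otimes>\<^sub>M distF f) (\<lambda>(x, y). \<gamma>1 x * \<phi>1 y) (\<lambda>(x, y). \<gamma>2 x * \<phi>2 y)"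
    if g1: "\<gamma>1 \<in> L2set H" and p1: "\<phi>1 \<in> L2set (distF f)" and g2: "\<gamma>2 \<in> L2set H" and p2: "\<phi>2 \<in> L2set (distF f)"
    for \<gamma>1 \<phi>1 \<gamma>2 \<phi>2
  proof -
    have i1: "(\<gamma>1, \<phi>1) \<in> L2set H \<times> L2set (distF f)" using g1 p1 by simp
    have i2: "(\<gamma>2, \<phi>2) \<in> L2set H \<times> L2set (distF f)" using g2 p2 by simp
    have sq1: "K.sq \<phi>1" "K.sq \<phi>2" using p1 p2 K.L2set_sq by blast+
    have gg: "integrable H (\<lambda>x. \<gamma>1 x * \<gamma>2 x)"
      by (rule gen_prod_int[OF gH(1)[OF g1] gH(2)[OF g1] gH(1)[OF g2] gH(2)[OF g2]])
    have "(LINT \<omega>|P. W (\<gamma>1, \<phi>1) \<omega> * W (\<gamma>2, \<phi>2) \<omega>) = (LINT \<omega>|P. b (A (\<gamma>1, \<phi>1)) \<omega> * b (A (\<gamma>2, \<phi>2)) \<omega>)"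
      unfolding WA[OF i1] WA[OF i2] ..
    also have "\<dots> = ip (H \<Otimes>\<^sub>M distF f) (A (\<gamma>1, \<phi>1)) (A (\<gamma>2, \<phi>2))"
      using b_cov AL[OF i1] AL[OF i2] by blast
    also have "\<dots> = (LINT x|H. \<gamma>1 x * \<gamma>2 x) * (LINT y|distF f. Lop f f' \<phi>1 y * Lop f f' \<phi>2 y)"
      unfolding A_def by (simp add: ip_prod[OF HP FP gg K.sq_prod[OF Lsq[OF p1] Lsq[OF p2]]])
    also have "\<dots> = (LINT x|H. \<gamma>1 x * \<gamma>2 x) * (LINT y|distF f. \<phi>1 y * \<phi>2 y)"
      using K.Lop_ip[OF sq1] by simp
    also have "\<dots> = ip (H \<Otimes>\<^sub>M distF f) (\<lambda>(x, y). \<gamma>1 x * \<phi>1 y) (\<lambda>(x, y). \<gamma>2 x * \<phi>2 y)"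
      by (rule ip_prod[OF HP FP gg K.sq_prod[OF sq1], symmetric])
    finally show ?thesis .
  qed
  show ?thesis
    unfolding Let_def W_def[symmetric] using P1 G C by blast
qed


end
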